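(* Assume the context distribution is stationary, i.e. $p(x,t)=p(x)p(t)$ on $\mathcal{X}\times[0,T]$ and $p(x\mid t')=p(x)$. Suppose $\pi_0(a\mid x,t)>0$ for all $x\in\mathcal{X}$, $t\in[0,T]$, $a\in\mathcal{A}$; that $p(\phi(t'))>0$; and that $\Delta_q(x,t,t',a)=\Delta_{\hat f}(x,t,t',a)$ for all $x\in\mathcal{X}$, $a\in\mathcal{A}$ and $t\in[0,T]$ with $\mathbb{I}_\phi(t,t')=1$. Then $$n\,\mathbb{V}_{\mathcal{D}}\big[\nabla_\zeta\hat V^{\mathrm{OPFV}}_{t'}(\pi_\zeta;\mathcal{D})\big]=\mathbb{E}_{p(x,t)\pi_0(a\mid x,t)}\!\left[\Big(\frac{\mathbb{I}_\phi(t,t')}{p(\phi(t'))}\frac{\pi_\zeta(a\mid x,t')}{\pi_0(a\mid x,t)}s_\zeta(x,t',a)\Big)^2\sigma^2(x,t,a)\right]$$ $$+\mathbb{E}_{p(x,t)}\!\left[\Big(\frac{\mathbb{I}_\phi(t,t')}{p(\phi(t'))}\Big)^2\mathbb{V}_{\pi_0(a\mid x,t)}\!\Big[\frac{\pi_\zeta(a\mid x,t')}{\pi_0(a\mid x,t)}\Delta_{q,\hat f}(x,t',a)s_\zeta(x,t',a)\Big]\right]$$ $$+\mathbb{V}_{p(t)}\!\left[\frac{\mathbb{I}_\phi(t,t')}{p(\phi(t'))}\right]\mathbb{E}_{p(x)}\!\left[\mathbb{E}_{\pi_\zeta(a\mid x,t')}\big[\Delta_{q,\hat f}(x,t',a)s_\zeta(x,t',a)\big]^2\right]+\mathbb{V}_{p(x)}\!\left[\mathbb{E}_{\pi_\zeta(a\mid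 x,t')}[q(x,t',a)s_\zeta(x,t',a)]\right].$$
   Context: Contexts $x\in\mathcal{X}$, finite action set $\mathcal{A}$, continuous time $t$, rewards $r\in[0,r_{\max}]$. Logged data $\mathcal{D}=\{(x_i,t_i,a_i,r_i)\}_{i=1}^n$: $n$ i.i.d. draws $(x,t)\sim p(x,t)$ supported on $\mathcal{X}\times[0,T]$, $a\sim\pi_0(a\mid x,t)$, $r\sim p(r\mid x,t,a)$; reward distributions defined for all $t\ge0$; $q(x,t,a)=\mathbb{E}[r\mid x,t,a]$, $\sigma^2(x,t,a)=\mathbb{V}[r\mid x,t,a]$. Target time $t'>T$. $\pi_\zeta(a\mid x,t)$ is a policy differentiable in a parameter vector $\zeta$, with score $s_\zeta(x,t,a)=\nabla_\zeta\log\pi_\zeta(a\mid x,t)$. A time feature function $\phi$ maps times to labels; $\mathbb{I}_\phi(t,t')=\mathbb{I}\{\phi(t)=\phi(t')\}$, $p(\phi(t'))=\int_0^Tp(s)\mathbb{I}_\phi(s,t')ds$ with $p(t)$ the marginal density of $t$. $\hat f$ is a fixed regressor. The OPFV gradient estimator is $$\nabla_\zeta\hat V^{\mathrm{OPFV}}_{t'}(\pi_\zeta;\mathcal{D})=\frac1n\sum_{i=1}^n\left\{\frac{\mathbb{I}_\phi(t_i,t')}{p(\phi(t'))}\frac{\pi_\zeta(a_i\mid x_i,t')}{\pi_0(a_i\mid x_i,t_i)}\big(r_i-\hat f(x_i,t_i,a_i)\big)s_\zeta(x_i,t',a_i)+\mathbb{E}_{\pi_\zeta(a\mid x_i,t')}\big[\hat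 f(x_i,t',a)s_\zeta(x_i,t',a)\big]\right\}.$$ $\Delta_q(x,t,t',a)=q(x,t,a)-q(x,t',a)$, $\Delta_{\hat f}(x,t,t',a)=\hat f(x,t,a)-\hat f(x,t',a)$, $\Delta_{q,\hat f}(x,t,a)=q(x,t,a)-\hat f(x,t,a)$. Variances and squares of vector-valued quantities are understood coordinatewise (the identity holds for each coordinate of $\zeta$, with $s_\zeta$ replaced by its corresponding coordinate). *)

theory Defs
  imports "HOL-Probability.Probability"
begin

definition Ex :: "'b measure \<Rightarrow> ('b \<Rightarrow> real) \<Rightarrow> real" where
  "Ex M f = (\<integral>y. f y \<partial>M)"

definition Var :: "'b measure \<Rightarrow> ('b \<Rightarrow> real) \<Rightarrow> real" where
  "Var M f = (\<integral>y. (f y - Ex M f)\<^sup>2 \<partial>M)"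

definition aexp :: "('a::finite \<Rightarrow> real) \<Rightarrow> ('a \<Rightarrow> real) \<Rightarrow> real" where
  "aexp w g = (\<Sum>a\<in>UNIV. w a * g a)"

definition avar :: "('a::finite \<Rightarrow> real) \<Rightarrow> ('a \<Rightarrow> real) \<Rightarrow> real" where
  "avar w g = (\<Sum>a\<in>UNIV. w a * (g a - aexp w g)\<^sup>2)"

definition actdist :: "('a::finite \<Rightarrow> real) \<Rightarrow> 'a measure" where
  "actdist w = density (count_space UNIV) (\<lambda>a. ennreal (w a))"

text \<open>Law of one logged sample (x,t,a,r): (x,t) ~ px \<times> pt (stationary contexts),
  a ~ pi0(.|x,t), r ~ R x t a.\<close>
definition sample_law ::
  "'x measure \<Rightarrow> real measure \<Rightarrow> ('x \<Rightarrow> real \<Rightarrow> 'a::finite \<Rightarrow> real)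
    \<Rightarrow> ('x \<Rightarrow> real \<Rightarrow> 'a \<Rightarrow> real measure) \<Rightarrow> ('x \<times> real \<times> 'a \<times> real) measure" where
  "sample_law px pt pi0 R =
     (px \<Otimes>\<^sub>M pt) \<bind> (\<lambda>(x, t). actdist (pi0 x t) \<bind>
        (\<lambda>a. distr (R x t a) (px \<Otimes>\<^sub>M borel \<Otimes>\<^sub>M count_space UNIV \<Otimes>\<^sub>M borel) (\<lambda>r. (x, t, a, r))))"

text \<open>p(phi(t')) = \<integral>_0^T p(s) I{phi(s) = phi(t')} ds, i.e. the pt-probability of {s in [0,T]. phi s = phi t'}.\<close>
definition pphi :: "real measure \<Rightarrow> real \<Rightarrow> (real \<Rightarrow> 'l) \<Rightarrow> real \<Rightarrow> real" where
  "pphi pt T \<phi> t' = measure pt {s \<in> {0..T}. \<phi> s = \<phi> t'}"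

text \<open>Per-sample OPFV gradient term (one coordinate of zeta; \<open>piz\<close> = pi_zeta, \<open>s\<close> = score coordinate).\<close>
definition opfv_term ::
  "real measure \<Rightarrow> real \<Rightarrow> (real \<Rightarrow> 'l) \<Rightarrow> real \<Rightarrow> ('x \<Rightarrow> real \<Rightarrow> 'a::finite \<Rightarrow> real)
    \<Rightarrow> ('x \<Rightarrow> real \<Rightarrow> 'a \<Rightarrow> real) \<Rightarrow> ('x \<Rightarrow> real \<Rightarrow> 'a \<Rightarrow> real) \<Rightarrow> ('x \<Rightarrow> real \<Rightarrow> 'a \<Rightarrow> real)
    \<Rightarrow> 'x \<times> real \<times> 'a \<times> real \<Rightarrow> real" where
  "opfv_term pt T \<phi> t' pi0 piz fhat s = (\<lambda>(x, t, a, r).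
     (if \<phi> t = \<phi> t' then 1 else 0) / pphi pt T \<phi> t' * (piz x t' a / pi0 x t a)
       * (r - fhat x t a) * s x t' a
     + aexp (piz x t') (\<lambda>b. fhat x t' b * s x t' b))"

definition opfv_grad ::
  "nat \<Rightarrow> real measure \<Rightarrow> real \<Rightarrow> (real \<Rightarrow> 'l) \<Rightarrow> real \<Rightarrow> ('x \<Rightarrow> real \<Rightarrow> 'a::finite \<Rightarrow> real)
    \<Rightarrow> ('x \<Rightarrow> real \<Rightarrow> 'a \<Rightarrow> real) \<Rightarrow> ('x \<Rightarrow> real \<Rightarrow> 'a \<Rightarrow> real) \<Rightarrow> ('x \<Rightarrow> real \<Rightarrow> 'a \<Rightarrow> real)
    \<Rightarrow> (nat \<Rightarrow> 'x \<times> real \<times> 'a \<times> real) \<Rightarrow> real" where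
  "opfv_grad n pt T \<phi> t' pi0 piz fhat s D =
     (1 / real n) * (\<Sum>i<n. opfv_term pt T \<phi> t' pi0 piz fhat s (D i))"

end

theory Submission
  imports Defs
begin

lemma bind_integral_nonneg:
  fixes f :: "_ \<Rightarrow> real"
  assumes N[measurable]: "N \<in> measurable M (subprob_algebra K)"
    and f[measurable]: "f \<in> borel_measurable K" and nn: "\<And>y. 0 \<le> f y"
    and int: "integrable (M \<bind> N) f"
  shows "AE x in M. integrable (N x) f"
    and "integrable M (\<lambda>x. integral\<^sup>L (N x) f)"
    and "integral\<^sup>L (M \<bind> N) f = (\<integral>x. integral\<^sup>L (N x) f \<partial>M)"
proof -
  have sN: "\<And>x. x \<in> space M \<Longrightarrow> sets (N x) = sets K" using N by (rule sets_kernel)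
  have fN: "\<And>x. x \<in> space M \<Longrightarrow> f \<in> borel_measurable (N x)"
    using sN f by (simp cong: measurable_cong_sets)
  have eq1: "(\<integral>\<^sup>+y. ennreal (f y) \<partial>(M \<bind> N)) = (\<integral>\<^sup>+x. \<integral>\<^sup>+y. ennreal (f y) \<partial>N x \<partial>M)"
    by (rule nn_integral_bind[OF _ N]) measurable
  have fin: "(\<integral>\<^sup>+y. ennreal (f y) \<partial>(M \<bind> N)) < \<infinity>"
    using int nn by (simp add: integrable_iff_bounded)
  have meas1: "(\<lambda>x. \<integral>\<^sup>+y. ennreal (f y) \<partial>N x) \<in> borel_measurable M"
    by (rule measurable_compose[OF N nn_integral_measurable_subprob_algebra]) measurable
  have AEfin: "AE x in M. (\<integral>\<^sup>+y. ennreal (f y) \<partial>N x) \<noteq> \<infinity>"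
    by (rule nn_integral_PInf_AE[OF meas1]) (use fin eq1 in auto)
  show AEi: "AE x in M. integrable (N x) f"
    using AEfin AE_space
  proof (eventually_elim)
    case (elim x)
    then show ?case using fN nn by (simp add: integrable_iff_bounded less_top)
  qed
  have meas2: "(\<lambda>x. integral\<^sup>L (N x) f) \<in> borel_measurable M"
    by (rule measurable_compose[OF N integral_measurable_subprob_algebra]) measurable
  have eq2: "(\<integral>\<^sup>+x. ennreal (integral\<^sup>L (N x) f) \<partial>M) = (\<integral>\<^sup>+x. \<integral>\<^sup>+y. ennreal (f y) \<partial>N x \<partial>M)"
  proof (rule nn_integral_cong_AE)
    show "AE x in M. ennreal (integral\<^sup>L (N x) f) = (\<integral>\<^sup>+y. ennreal (f y) \<partial>N x)"
      using AEi AE_space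
    proof (eventually_elim)
      case (elim x)
      then show ?case using nn by (subst nn_integral_eq_integral) auto
    qed
  qed
  show int2: "integrable M (\<lambda>x. integral\<^sup>L (N x) f)"
    using meas2 eq2 eq1 fin nn by (simp add: integrable_iff_bounded integral_nonneg)
  show "integral\<^sup>L (M \<bind> N) f = (\<integral>x. integral\<^sup>L (N x) f \<partial>M)"
  proof -
    have "ennreal (integral\<^sup>L (M \<bind> N) f) = (\<integral>\<^sup>+y. ennreal (f y) \<partial>(M \<bind> N))"
      using int nn by (subst nn_integral_eq_integral) auto
    also have "\<dots> = (\<integral>\<^sup>+x. ennreal (integral\<^sup>L (N x) f) \<partial>M)"
      using eq1 eq2 by simp
    also have "\<dots> = ennreal (\<integral>x. integral\<^sup>L (N x) f \<partial>M)"
      using int2 nn by (intro nn_integral_eq_integral) (auto simp: integral_nonneg)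
    finally show ?thesis using nn by (simp add: integral_nonneg integral_nonneg_AE)
  qed
qed

lemma bind_integral:
  fixes f :: "_ \<Rightarrow> real"
  assumes N[measurable]: "N \<in> measurable M (subprob_algebra K)"
    and f[measurable]: "f \<in> borel_measurable K"
    and int: "integrable (M \<bind> N) f"
  shows "AE x in M. integrable (N x) f"
    and "integrable M (\<lambda>x. integral\<^sup>L (N x) f)"
    and "integral\<^sup>L (M \<bind> N) f = (\<integral>x. integral\<^sup>L (N x) f \<partial>M)"
proof -
  have i1: "integrable (M \<bind> N) (\<lambda>y. max (f y) 0)" using int by auto
  have i2: "integrable (M \<bind> N) (\<lambda>y. max (- f y) 0)" using int by auto
  have m1: "(\<lambda>y. max (f y) 0) \<in> borel_measurable K" "(\<lambda>y. max (- f y) 0) \<in> borel_measurable K" by measurable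
  have n1: "\<And>y. 0 \<le> max (f y) (0::real)" "\<And>y. 0 \<le> max (- f y) (0::real)" by simp_all
  note A = bind_integral_nonneg[OF N m1(1) n1(1) i1] bind_integral_nonneg[OF N m1(2) n1(2) i2]
  have fe: "\<And>y. f y = max (f y) 0 - max (- f y) 0" by auto
  have ff: "(\<lambda>y. max (f y) 0 - max (- f y) 0) = f" by (auto simp: fun_eq_iff)
  show AEi: "AE x in M. integrable (N x) f"
    using A(1) A(4) by eventually_elim (subst ff[symmetric], auto)
  have e: "AE x in M. integral\<^sup>L (N x) f = integral\<^sup>L (N x) (\<lambda>y. max (f y) 0) - integral\<^sup>L (N x) (\<lambda>y. max (- f y) 0)"
    using A(1) A(4) by eventually_elim (subst ff[symmetric], auto)
  have meas2: "(\<lambda>x. integral\<^sup>L (N x) f) \<in> borel_measurable M"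
    by (rule measurable_compose[OF N integral_measurable_subprob_algebra]) measurable
  have meas3: "(\<lambda>x. integral\<^sup>L (N x) (\<lambda>y. max (f y) 0) - integral\<^sup>L (N x) (\<lambda>y. max (- f y) 0)) \<in> borel_measurable M"
    using A(2) A(5) by auto
  show "integrable M (\<lambda>x. integral\<^sup>L (N x) f)"
    using integrable_cong_AE[OF meas2 meas3 e] A(2) A(5) by auto
  have "integral\<^sup>L (M \<bind> N) f = integral\<^sup>L (M \<bind> N) (\<lambda>y. max (f y) 0) - integral\<^sup>L (M \<bind> N) (\<lambda>y. max (- f y) 0)"
    by (subst ff[symmetric], rule Bochner_Integration.integral_diff[OF i1 i2])
  also have "\<dots> = (\<integral>x. integral\<^sup>L (N x) (\<lambda>y. max (f y) 0) - integral\<^sup>L (N x) (\<lambda>y. max (- f y) 0) \<partial>M)"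
    using A(3) A(6) A(2) A(5) by simp
  also have "\<dots> = (\<integral>x. integral\<^sup>L (N x) f \<partial>M)"
    by (rule integral_cong_AE[OF meas3 meas2]) (use e in auto)
  finally show "integral\<^sup>L (M \<bind> N) f = (\<integral>x. integral\<^sup>L (N x) f \<partial>M)" .
qed

lemma iid_var:
  fixes Y :: "'b \<Rightarrow> real" and M :: "'b measure"
  assumes M: "prob_space M" and Ym[measurable]: "Y \<in> borel_measurable M"
    and Y2: "integrable M (\<lambda>x. (Y x)\<^sup>2)" and n: "n > 0"
  shows "real n * Var (PiM {..<n} (\<lambda>_. M)) (\<lambda>D. (1 / real n) * (\<Sum>i<n. Y (D i))) = Var M Y"
proof -
  interpret M: prob_space M by (rule M)
  interpret P: finite_product_prob_space "\<lambda>_. M" "{..<n}"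
    by unfold_locales (auto simp: M)
  have Y1: "integrable M Y" by (rule M.square_integrable_imp_integrable[OF Ym Y2])
  define \<mu> where "\<mu> = Ex M Y"
  define Z where "Z = (\<lambda>x. Y x - \<mu>)"
  have Zm[measurable]: "Z \<in> borel_measurable M" unfolding Z_def by measurable
  have Z1: "integrable M Z" unfolding Z_def
    by (rule Bochner_Integration.integrable_diff[OF Y1 M.integrable_const])
  have Z2: "integrable M (\<lambda>x. (Z x)\<^sup>2)"
  proof -
    have e: "(\<lambda>x. (Z x)\<^sup>2) = (\<lambda>x. (Y x)\<^sup>2 - 2 * \<mu> * Y x + \<mu>\<^sup>2)"
      unfolding Z_def by (simp add: power2_diff fun_eq_iff)
    show ?thesis unfolding e using Y1 Y2 by (intro Bochner_Integration.integrable_add Bochner_Integration.integrable_diff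
        Bochner_Integration.integrable_mult_right M.integrable_const)
  qed
  have EZ: "integral\<^sup>L M Z = 0" unfolding Z_def \<mu>_def Ex_def
    using M.prob_space by (simp add: Bochner_Integration.integral_diff[OF Y1 M.integrable_const])
  have VZ: "integral\<^sup>L M (\<lambda>x. (Z x)\<^sup>2) = Var M Y" unfolding Var_def Z_def \<mu>_def by (rule refl)
  have IY: "\<And>b. integrable M (\<lambda>x. if b then Y x else 1)"
    subgoal for b by (cases b) (simp_all add: Y1)
    done
  have EYi: "(\<integral>D. Y (D i) \<partial>PiM {..<n} (\<lambda>_. M)) = \<mu>" if i: "i < n" for i
  proof -
    have "(\<integral>D. (\<Prod>k\<in>{..<n}. (\<lambda>k x. if k = i then Y x else 1) k (D k)) \<partial>PiM {..<n} (\<lambda>_. M))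
        = (\<Prod>k\<in>{..<n}. integral\<^sup>L M ((\<lambda>k x. if k = i then Y x else 1) k))"
      by (rule P.product_integral_prod) (auto simp: IY)
    moreover have "(\<Prod>k\<in>{..<n}. (\<lambda>k x. if k = i then Y x else 1) k (D k)) = Y (D i)" for D
      using i by simp
    moreover have "(\<Prod>k\<in>{..<n}. integral\<^sup>L M ((\<lambda>k x. if k = i then Y x else 1) k)) = integral\<^sup>L M Y"
    proof -
      have "(\<Prod>k\<in>{..<n}. integral\<^sup>L M ((\<lambda>k x. if k = i then Y x else 1) k))
          = (\<Prod>k\<in>{..<n}. if k = i then integral\<^sup>L M Y else 1)"
        using M.prob_space by (intro prod.cong refl) auto
      then show ?thesis using i by simp
    qed
    ultimately show ?thesis by (simp add: \<mu>_def Ex_def)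
  qed
  have ZZ: "(\<integral>D. Z (D i) * Z (D j) \<partial>PiM {..<n} (\<lambda>_. M)) = (if i = j then Var M Y else 0)"
    and ZZi: "integrable (PiM {..<n} (\<lambda>_. M)) (\<lambda>D. Z (D i) * Z (D j))"
    if ij: "i < n" "j < n" for i j
  proof -
    define f where "f = (\<lambda>k. if k = i \<and> k = j then (\<lambda>x. (Z x)\<^sup>2) else if k = i \<or> k = j then Z else (\<lambda>_. 1))"
    have fi: "\<And>k. integrable M (f k)" by (simp add: f_def Z1 Z2)
    have fx: "\<And>k x. f k x = (if k = i \<and> k = j then (Z x)\<^sup>2 else if k = i \<or> k = j then Z x else 1)"
      by (simp add: f_def)
    have pe: "(\<Prod>k\<in>{..<n}. f k (D k)) = Z (D i) * Z (D j)" for D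
    proof (cases "i = j")
      case True
      have "(\<Prod>k\<in>{..<n}. f k (D k)) = (\<Prod>k\<in>{..<n}. if k = i then (Z (D k))\<^sup>2 else 1)"
        using True by (intro prod.cong) (auto simp: fx)
      then show ?thesis using ij True by (simp add: power2_eq_square)
    next
      case False
      have "(\<Prod>k\<in>{..<n}. f k (D k)) = (\<Prod>k\<in>{..<n}. (if k = i then Z (D k) else 1) * (if k = j then Z (D k) else 1))"
        using False by (intro prod.cong) (auto simp: fx)
      also have "\<dots> = Z (D i) * Z (D j)" using ij by (simp add: prod.distrib)
      finally show ?thesis .
    qed
    have ie: "(\<Prod>k\<in>{..<n}. integral\<^sup>L M (f k)) = (if i = j then Var M Y else 0)"
    proof (cases "i = j")
      case True
      have "(\<Prod>k\<in>{..<n}. integral\<^sup>L M (f k)) = (\<Prod>k\<in>{..<n}. if k = i then integral\<^sup>L M (\<lambda>x. (Z x)\<^sup>2) else 1)"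
        using True M.prob_space by (intro prod.cong) (auto simp: f_def)
      then show ?thesis using True ij VZ by simp
    next
      case False
      have "integral\<^sup>L M (f i) = 0" using False EZ by (simp add: f_def)
      then have "(\<Prod>k\<in>{..<n}. integral\<^sup>L M (f k)) = 0" using ij by (intro prod_zero) auto
      then show ?thesis using False by simp
    qed
    show "(\<integral>D. Z (D i) * Z (D j) \<partial>PiM {..<n} (\<lambda>_. M)) = (if i = j then Var M Y else 0)"
      using P.product_integral_prod[of "{..<n}" f] fi pe ie by simp
    show "integrable (PiM {..<n} (\<lambda>_. M)) (\<lambda>D. Z (D i) * Z (D j))"
      using P.product_integrable_prod[of "{..<n}" f] fi pe by simp
  qed
  have Yi: "\<And>i. i < n \<Longrightarrow> integrable (PiM {..<n} (\<lambda>_. M)) (\<lambda>D. Y (D i))"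
  proof -
    fix i assume i: "i < n"
    have "integrable (PiM {..<n} (\<lambda>_. M)) (\<lambda>D. (\<Prod>k\<in>{..<n}. (\<lambda>k x. if k = i then Y x else 1) k (D k)))"
      by (rule P.product_integrable_prod) (auto simp: IY)
    moreover have "(\<Prod>k\<in>{..<n}. (\<lambda>k x. if k = i then Y x else 1) k (D k)) = Y (D i)" for D
      using i by simp
    ultimately show "integrable (PiM {..<n} (\<lambda>_. M)) (\<lambda>D. Y (D i))" by simp
  qed
  have Emean: "Ex (PiM {..<n} (\<lambda>_. M)) (\<lambda>D. (1 / real n) * (\<Sum>i<n. Y (D i))) = \<mu>"
    unfolding Ex_def using Yi EYi n by (simp add: integral_sum)
  have "Var (PiM {..<n} (\<lambda>_. M)) (\<lambda>D. (1 / real n) * (\<Sum>i<n. Y (D i)))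
      = (\<integral>D. (1 / real n)\<^sup>2 * (\<Sum>i<n. \<Sum>j<n. Z (D i) * Z (D j)) \<partial>PiM {..<n} (\<lambda>_. M))"
  proof -
    have h1: "\<And>D. (1 / real n) * (\<Sum>i<n. Y (D i)) - \<mu> = (1 / real n) * (\<Sum>i<n. Z (D i))"
      using n by (simp add: Z_def sum_subtractf field_simps)
    have h2: "((1 / real n) * (\<Sum>i<n. Y (D i)) - \<mu>)\<^sup>2 = (1 / real n)\<^sup>2 * (\<Sum>i<n. \<Sum>j<n. Z (D i) * Z (D j))" for D
    proof -
      have "(\<Sum>i<n. Z (D i))\<^sup>2 = (\<Sum>i<n. \<Sum>j<n. Z (D i) * Z (D j))"
        by (simp add: power2_eq_square sum_product)
      then show ?thesis unfolding h1 power_mult_distrib by simp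
    qed
    show ?thesis unfolding Var_def Emean by (intro Bochner_Integration.integral_cong refl h2)
  qed
  also have "\<dots> = (1 / real n)\<^sup>2 * (\<Sum>i<n. \<Sum>j<n. (if i = j then Var M Y else 0))"
  proof -
    have "(\<integral>D. (\<Sum>i<n. \<Sum>j<n. Z (D i) * Z (D j)) \<partial>PiM {..<n} (\<lambda>_. M))
        = (\<Sum>i<n. \<integral>D. (\<Sum>j<n. Z (D i) * Z (D j)) \<partial>PiM {..<n} (\<lambda>_. M))"
      by (rule Bochner_Integration.integral_sum) (auto intro!: Bochner_Integration.integrable_sum ZZi)
    also have "\<dots> = (\<Sum>i<n. \<Sum>j<n. \<integral>D. Z (D i) * Z (D j) \<partial>PiM {..<n} (\<lambda>_. M))"
      by (rule sum.cong[OF refl], rule Bochner_Integration.integral_sum) (auto intro!: ZZi)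
    also have "\<dots> = (\<Sum>i<n. \<Sum>j<n. (if i = j then Var M Y else 0))"
      by (rule sum.cong[OF refl], rule sum.cong[OF refl]) (auto simp: ZZ)
    finally have "(\<integral>D. (\<Sum>i<n. \<Sum>j<n. Z (D i) * Z (D j)) \<partial>PiM {..<n} (\<lambda>_. M)) = (\<Sum>i<n. \<Sum>j<n. (if i = j then Var M Y else 0))" .
    then show ?thesis by (simp only: integral_mult_right_zero)
  qed
  also have "\<dots> = Var M Y / real n"
  proof -
    have "(\<Sum>i<n. \<Sum>j<n. (if i = j then Var M Y else 0)) = (\<Sum>i<n. Var M Y)"
      by (rule sum.cong[OF refl]) simp
    then show ?thesis using n by (simp add: power2_eq_square)
  qed
  finally show ?thesis using n by (simp add: field_simps)
qed

lemma actdist_sets[simp]: "sets (actdist w) = sets (count_space UNIV)"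
  by (simp add: actdist_def)

lemma actdist_space[simp]: "space (actdist w) = UNIV"
  by (simp add: actdist_def)

lemma K_kernel_meas:
  fixes w :: "'a::finite \<Rightarrow> real" and R' :: "'a \<Rightarrow> real measure" and h :: "'a \<Rightarrow> real \<Rightarrow> 'b"
  assumes Rp: "\<And>a. prob_space (R' a)" and Rs: "\<And>a. sets (R' a) = sets borel"
    and hm: "\<And>a. h a \<in> borel \<rightarrow>\<^sub>M N"
  shows "(\<lambda>a. distr (R' a) N (h a)) \<in> measurable (actdist w) (subprob_algebra N)"
proof -
  have "distr (R' a) N (h a) \<in> space (subprob_algebra N)" for a
  proof -
    have hm': "h a \<in> R' a \<rightarrow>\<^sub>M N" using hm[of a] Rs[of a] by (simp cong: measurable_cong_sets)
    interpret prob_space "R' a" by (rule Rp)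
    have "prob_space (distr (R' a) N (h a))" by (rule prob_space_distr[OF hm'])
    then show ?thesis by (auto simp: space_subprob_algebra prob_space_imp_subprob_space)
  qed
  then show ?thesis
    by (simp add: measurable_cong_sets[OF actdist_sets refl])
qed

lemma K_sets:
  fixes w :: "'a::finite \<Rightarrow> real" and R' :: "'a \<Rightarrow> real measure" and h :: "'a \<Rightarrow> real \<Rightarrow> 'b"
  assumes Rp: "\<And>a. prob_space (R' a)" and Rs: "\<And>a. sets (R' a) = sets borel"
    and hm: "\<And>a. h a \<in> borel \<rightarrow>\<^sub>M N"
  shows "sets (actdist w \<bind> (\<lambda>a. distr (R' a) N (h a))) = sets N"
  by (rule sets_bind_measurable[OF K_kernel_meas[OF Rp Rs hm]]) simp

lemma K_emeasure:
  fixes w :: "'a::finite \<Rightarrow> real" and R' :: "'a \<Rightarrow> real measure" and h :: "'a \<Rightarrow> real \<Rightarrow> 'b"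
  assumes Rp: "\<And>a. prob_space (R' a)" and Rs: "\<And>a. sets (R' a) = sets borel"
    and hm: "\<And>a. h a \<in> borel \<rightarrow>\<^sub>M N" and X: "X \<in> sets N"
  shows "emeasure (actdist w \<bind> (\<lambda>a. distr (R' a) N (h a))) X
       = (\<Sum>a\<in>UNIV. ennreal (w a) * emeasure (R' a) (h a -` X))"
proof -
  have "emeasure (actdist w \<bind> (\<lambda>a. distr (R' a) N (h a))) X
      = (\<integral>\<^sup>+a. emeasure (distr (R' a) N (h a)) X \<partial>actdist w)"
    by (rule emeasure_bind[OF _ K_kernel_meas[OF Rp Rs hm] X]) simp
  also have "\<dots> = (\<integral>\<^sup>+a. ennreal (w a) * emeasure (distr (R' a) N (h a)) X \<partial>count_space UNIV)"
    unfolding actdist_def by (subst nn_integral_density) auto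
  also have "\<dots> = (\<Sum>a\<in>UNIV. ennreal (w a) * emeasure (R' a) (h a -` X))"
  proof -
    have "emeasure (distr (R' a) N (h a)) X = emeasure (R' a) (h a -` X)" for a
    proof -
      have hm': "h a \<in> R' a \<rightarrow>\<^sub>M N" using hm[of a] Rs[of a] by (simp cong: measurable_cong_sets)
      have sp: "space (R' a) = UNIV" using sets_eq_imp_space_eq[OF Rs[of a]] by simp
      show ?thesis using emeasure_distr[OF hm' X] sp by simp
    qed
    then show ?thesis by (simp add: nn_integral_count_space_finite)
  qed
  finally show ?thesis .
qed

lemma K_integral:
  fixes w :: "'a::finite \<Rightarrow> real" and R' :: "'a \<Rightarrow> real measure" and h :: "'a \<Rightarrow> real \<Rightarrow> 'b"
    and f :: "'b \<Rightarrow> real"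
  assumes Rp: "\<And>a. prob_space (R' a)" and Rs: "\<And>a. sets (R' a) = sets borel"
    and hm: "\<And>a. h a \<in> borel \<rightarrow>\<^sub>M N" and wn: "\<And>a. 0 \<le> w a"
    and f: "f \<in> borel_measurable N"
    and int: "integrable (actdist w \<bind> (\<lambda>a. distr (R' a) N (h a))) f"
  shows "integral\<^sup>L (actdist w \<bind> (\<lambda>a. distr (R' a) N (h a))) f
       = (\<Sum>a\<in>UNIV. w a * integral\<^sup>L (R' a) (\<lambda>r. f (h a r)))"
proof -
  have "integral\<^sup>L (actdist w \<bind> (\<lambda>a. distr (R' a) N (h a))) f
      = (\<integral>a. integral\<^sup>L (distr (R' a) N (h a)) f \<partial>actdist w)"
    by (rule bind_integral(3)[OF K_kernel_meas[OF Rp Rs hm] f int])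
  also have "\<dots> = (\<integral>a. w a * integral\<^sup>L (distr (R' a) N (h a)) f \<partial>count_space UNIV)"
    unfolding actdist_def by (subst integral_density) (auto simp: wn)
  also have "\<dots> = (\<Sum>a\<in>UNIV. w a * integral\<^sup>L (R' a) (\<lambda>r. f (h a r)))"
  proof -
    have "integral\<^sup>L (distr (R' a) N (h a)) f = integral\<^sup>L (R' a) (\<lambda>r. f (h a r))" for a
    proof -
      have hm': "h a \<in> R' a \<rightarrow>\<^sub>M N" using hm[of a] Rs[of a] by (simp cong: measurable_cong_sets)
      show ?thesis by (rule integral_distr[OF hm' f])
    qed
    then show ?thesis by (simp add: lebesgue_integral_count_space_finite)
  qed
  finally show ?thesis .
qed

lemma bind_eq_partial:
  assumes f: "f \<in> measurable (restrict_space M S1) (subprob_algebra N)"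
    and S1: "S1 \<in> sets M"
    and S1I: "\<And>z. z \<in> space M \<Longrightarrow> f z \<in> space (subprob_algebra N) \<Longrightarrow> z \<in> S1"
    and g: "g \<in> measurable M (subprob_algebra N)"
    and ae: "AE z in M. f z = g z"
    and sets_f: "\<And>z. z \<in> space M \<Longrightarrow> sets (f z) = sets N"
  shows "bind M f = bind M g"
proof (cases "space M = {}")
  case True
  then show ?thesis by (simp add: bind_empty)
next
  case False
  define z0 where "z0 = (SOME x. x \<in> space M)"
  have z0: "z0 \<in> space M" unfolding z0_def using False by (metis ex_in_conv someI_ex)
  have e1: "subprob_algebra (f z0) = subprob_algebra N" by (rule subprob_algebra_cong[OF sets_f[OF z0]])
  have e2: "subprob_algebra (g z0) = subprob_algebra N" by (rule subprob_algebra_cong[OF sets_kernel[OF g z0]])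
  have S1M: "S1 \<inter> space M \<in> sets M" using S1 by auto
  have "distr M (subprob_algebra N) f = distr M (subprob_algebra N) g"
    unfolding distr_def
  proof (rule measure_of_eq)
    show "sets (subprob_algebra N) \<subseteq> Pow (space (subprob_algebra N))"
      by (rule sets.space_closed)
    fix a assume "a \<in> sigma_sets (space (subprob_algebra N)) (sets (subprob_algebra N))"
    then have a: "a \<in> sets (subprob_algebra N)" by (simp add: sets.sigma_sets_eq)
    have ga: "g -` a \<inter> space M \<in> sets M" by (rule measurable_sets[OF g a])
    have "f -` a \<inter> space M = f -` a \<inter> space (restrict_space M S1)"
      using S1I sets.sets_into_space[OF a] by (auto simp: space_restrict_space)
    also have "\<dots> \<in> sets (restrict_space M S1)" by (rule measurable_sets[OF f a])
    finally have fa: "f -` a \<inter> space M \<in> sets M"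
      using sets_restrict_space_iff[OF S1M] by blast
    show "emeasure M (f -` a \<inter> space M) = emeasure M (g -` a \<inter> space M)"
      by (rule emeasure_eq_AE[OF _ fa ga]) (use ae in auto)
  qed
  then show ?thesis unfolding bind_def z0_def[symmetric] using False e1 e2 by simp
qed

lemma R_moments:
  fixes Rm :: "real measure"
  assumes Rp: "prob_space Rm" and Rs: "sets Rm = sets borel" and bd: "AE r in Rm. 0 \<le> r \<and> r \<le> B"
  shows "integral\<^sup>L Rm (\<lambda>r. c1 * r + c0) = c1 * Ex Rm (\<lambda>r. r) + c0"
    and "integral\<^sup>L Rm (\<lambda>r. (c1 * r + c0)\<^sup>2) = c1\<^sup>2 * Var Rm (\<lambda>r. r) + (c1 * Ex Rm (\<lambda>r. r) + c0)\<^sup>2"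
proof -
  interpret prob_space Rm by (rule Rp)
  have idm[measurable]: "(\<lambda>r. r) \<in> borel_measurable Rm" using Rs by (simp cong: measurable_cong_sets)
  have "AE r in Rm. norm r \<le> B" using bd by (rule eventually_mono) auto
  then have i1: "integrable Rm (\<lambda>r. r)"
    by (rule integrable_const_bound[where B=B]) simp
  define \<mu> where "\<mu> = Ex Rm (\<lambda>r. r)"
  have "AE r in Rm. norm ((r - \<mu>)\<^sup>2) \<le> (\<bar>B\<bar> + \<bar>\<mu>\<bar>)\<^sup>2" using bd
  proof (rule eventually_mono)
    fix r assume r: "0 \<le> r \<and> r \<le> B"
    have "\<bar>r - \<mu>\<bar> \<le> \<bar>B\<bar> + \<bar>\<mu>\<bar>" using r by (auto simp: abs_le_iff abs_if)
    then have "\<bar>r - \<mu>\<bar>\<^sup>2 \<le> (\<bar>B\<bar> + \<bar>\<mu>\<bar>)\<^sup>2" by (rule power_mono) simp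
    then show "norm ((r - \<mu>)\<^sup>2) \<le> (\<bar>B\<bar> + \<bar>\<mu>\<bar>)\<^sup>2" by simp
  qed
  then have i2: "integrable Rm (\<lambda>r. (r - \<mu>)\<^sup>2)"
    by (rule integrable_const_bound) simp
  have e0: "integral\<^sup>L Rm (\<lambda>r. r - \<mu>) = 0"
    using i1 prob_space by (simp add: \<mu>_def Ex_def)
  show "integral\<^sup>L Rm (\<lambda>r. c1 * r + c0) = c1 * Ex Rm (\<lambda>r. r) + c0"
    using i1 prob_space by (simp add: Ex_def)
  have eq: "(\<lambda>r. (c1 * r + c0)\<^sup>2) = (\<lambda>r. c1\<^sup>2 * (r - \<mu>)\<^sup>2 + (2 * c1 * (c1 * \<mu> + c0)) * (r - \<mu>) + (c1 * \<mu> + c0)\<^sup>2)"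
    by (simp add: fun_eq_iff power2_eq_square algebra_simps)
  have i3: "integrable Rm (\<lambda>r. r - \<mu>)" using i1 by simp
  have "integral\<^sup>L Rm (\<lambda>r. (c1 * r + c0)\<^sup>2)
      = c1\<^sup>2 * integral\<^sup>L Rm (\<lambda>r. (r - \<mu>)\<^sup>2) + (2 * c1 * (c1 * \<mu> + c0)) * integral\<^sup>L Rm (\<lambda>r. r - \<mu>) + (c1 * \<mu> + c0)\<^sup>2"
    unfolding eq using i2 i3 prob_space by simp
  then show "integral\<^sup>L Rm (\<lambda>r. (c1 * r + c0)\<^sup>2) = c1\<^sup>2 * Var Rm (\<lambda>r. r) + (c1 * Ex Rm (\<lambda>r. r) + c0)\<^sup>2"
    using e0 by (simp add: Var_def \<mu>_def)
qed

lemma avar_decomp: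
  fixes p g :: "'a::finite \<Rightarrow> real"
  assumes "(\<Sum>a\<in>UNIV. p a) = 1"
  shows "(\<Sum>a\<in>UNIV. p a * (w * g a + G)\<^sup>2) = w\<^sup>2 * avar p g + (w * aexp p g + G)\<^sup>2"
proof -
  define E where "E = aexp p g"
  have E: "E = (\<Sum>a\<in>UNIV. p a * g a)" by (simp add: E_def aexp_def)
  have 1: "(\<Sum>a\<in>UNIV. p a * (w * g a + G)\<^sup>2)
      = w\<^sup>2 * (\<Sum>a\<in>UNIV. p a * (g a)\<^sup>2) + 2 * w * G * (\<Sum>a\<in>UNIV. p a * g a) + G\<^sup>2 * (\<Sum>a\<in>UNIV. p a)"
    by (simp add: power2_eq_square algebra_simps sum.distrib sum_distrib_left)
  have 2: "avar p g = (\<Sum>a\<in>UNIV. p a * (g a)\<^sup>2) - 2 * E * (\<Sum>a\<in>UNIV. p a * g a) + E\<^sup>2 * (\<Sum>a\<in>UNIV. p a)"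
    unfolding avar_def E_def[symmetric]
    by (simp add: power2_eq_square algebra_simps sum.distrib sum_distrib_left sum_subtractf)
  define S2 where "S2 = (\<Sum>a\<in>UNIV. p a * (g a)\<^sup>2)"
  have h1: "(\<Sum>a\<in>UNIV. p a * (w * g a + G)\<^sup>2) = w\<^sup>2 * S2 + 2 * w * G * E + G\<^sup>2"
    using 1 assms E by (simp add: S2_def)
  have h2: "avar p g = S2 - E\<^sup>2"
    using 2 assms E by (simp add: S2_def power2_eq_square)
  show ?thesis unfolding E_def[symmetric] h1 h2 by (simp add: power2_eq_square algebra_simps)
qed

lemma prod_sep:
  fixes a :: "'p \<Rightarrow> real" and b :: "'q \<Rightarrow> real"
  assumes M1: "prob_space M1" and M2: "prob_space M2" and a: "integrable M1 a" and b: "integrable M2 b"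
  shows "integrable (M1 \<Otimes>\<^sub>M M2) (\<lambda>z. a (fst z) * b (snd z))"
    and "integral\<^sup>L (M1 \<Otimes>\<^sub>M M2) (\<lambda>z. a (fst z) * b (snd z)) = integral\<^sup>L M1 a * integral\<^sup>L M2 b"
proof -
  interpret pp: pair_prob_space M1 M2 using M1 M2 by (simp add: pair_prob_space_def pair_sigma_finite_def prob_space_imp_sigma_finite)
  have am[measurable]: "a \<in> borel_measurable M1" using a by (rule borel_measurable_integrable)
  have bm[measurable]: "b \<in> borel_measurable M2" using b by (rule borel_measurable_integrable)
  have "(\<integral>\<^sup>+z. ennreal (norm (a (fst z) * b (snd z))) \<partial>(M1 \<Otimes>\<^sub>M M2))
      = (\<integral>\<^sup>+x. \<integral>\<^sup>+y. ennreal (norm (a x)) * ennreal (norm (b y)) \<partial>M2 \<partial>M1)"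
    by (subst pp.M2.nn_integral_fst[symmetric]) (auto simp: abs_mult ennreal_mult)
  also have "\<dots> = (\<integral>\<^sup>+x. ennreal (norm (a x)) * (\<integral>\<^sup>+y. ennreal (norm (b y)) \<partial>M2) \<partial>M1)"
    by (simp add: nn_integral_cmult)
  also have "\<dots> = (\<integral>\<^sup>+x. ennreal (norm (a x)) \<partial>M1) * (\<integral>\<^sup>+y. ennreal (norm (b y)) \<partial>M2)"
    by (simp add: nn_integral_multc)
  also have "\<dots> < \<infinity>" using a b by (simp add: integrable_iff_bounded ennreal_mult_less_top)
  finally show i: "integrable (M1 \<Otimes>\<^sub>M M2) (\<lambda>z. a (fst z) * b (snd z))"
    by (simp add: integrable_iff_bounded)
  have "integral\<^sup>L (M1 \<Otimes>\<^sub>M M2) (\<lambda>z. a (fst z) * b (snd z)) = (\<integral>x. (\<integral>y. a x * b y \<partial>M2) \<partial>M1)"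
    using pp.integral_fst'[OF i] by simp
  also have "\<dots> = (\<integral>x. a x * integral\<^sup>L M2 b \<partial>M1)" by simp
  also have "\<dots> = integral\<^sup>L M1 a * integral\<^sup>L M2 b" by simp
  finally show "integral\<^sup>L (M1 \<Otimes>\<^sub>M M2) (\<lambda>z. a (fst z) * b (snd z)) = integral\<^sup>L M1 a * integral\<^sup>L M2 b" .
qed

lemma prod_fst:
  fixes a :: "'p \<Rightarrow> real"
  assumes M1: "prob_space M1" and M2: "prob_space M2" and am: "a \<in> borel_measurable M1"
  shows "integrable (M1 \<Otimes>\<^sub>M M2) (\<lambda>z. a (fst z)) \<longleftrightarrow> integrable M1 a"
    and "integral\<^sup>L (M1 \<Otimes>\<^sub>M M2) (\<lambda>z. a (fst z)) = integral\<^sup>L M1 a"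
proof -
  interpret M2: prob_space M2 by (rule M2)
  have fm: "fst \<in> measurable (M1 \<Otimes>\<^sub>M M2) M1" by simp
  have d: "distr (M1 \<Otimes>\<^sub>M M2) M1 fst = M1" by (rule M2.distr_pair_fst)
  show "integrable (M1 \<Otimes>\<^sub>M M2) (\<lambda>z. a (fst z)) \<longleftrightarrow> integrable M1 a"
    using integrable_distr_eq[OF fm am] unfolding d by simp
  show "integral\<^sup>L (M1 \<Otimes>\<^sub>M M2) (\<lambda>z. a (fst z)) = integral\<^sup>L M1 a"
    using integral_distr[OF fm am] unfolding d by simp
qed

theorem propositionF4:
  fixes px :: "'x measure" and pt :: "real measure"
    and pi0 :: "'x \<Rightarrow> real \<Rightarrow> 'a::finite \<Rightarrow> real"
    and R :: "'x \<Rightarrow> real \<Rightarrow> 'a \<Rightarrow> real measure"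
    and pi_fun :: "real^'d \<Rightarrow> 'x \<Rightarrow> real \<Rightarrow> 'a \<Rightarrow> real"
    and \<zeta> :: "real^'d" and j :: 'd
    and s :: "'x \<Rightarrow> real \<Rightarrow> 'a \<Rightarrow> real"
    and fhat :: "'x \<Rightarrow> real \<Rightarrow> 'a \<Rightarrow> real"
    and \<phi> :: "real \<Rightarrow> 'l"
    and T t' r_max :: real and n :: nat
  defines "q \<equiv> \<lambda>x t a. Ex (R x t a) (\<lambda>r. r)"
    and "\<sigma>2 \<equiv> \<lambda>x t a. Var (R x t a) (\<lambda>r. r)"
    and "piz \<equiv> pi_fun \<zeta>"
    and "P \<equiv> pphi pt T \<phi> t'"
    and "w \<equiv> \<lambda>t. (if \<phi> t = \<phi> t' then 1 else 0) / pphi pt T \<phi> t'"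
    and "M1 \<equiv> sample_law px pt pi0 R"
  assumes px: "prob_space px"
    and pt: "prob_space pt" "sets pt = sets borel" "AE t in pt. t \<in> {0..T}"
    and target: "T < t'" and n_pos: "n > 0"
    and R_prob: "\<And>x t a. prob_space (R x t a)"
    and R_sets: "\<And>x t a. sets (R x t a) = sets borel"
    and R_bounded: "\<And>x t a. x \<in> space px \<Longrightarrow> t \<ge> 0 \<Longrightarrow> AE r in R x t a. 0 \<le> r \<and> r \<le> r_max"
    and R_meas: "(\<lambda>(x, t, a). R x t a)
                   \<in> px \<Otimes>\<^sub>M borel \<Otimes>\<^sub>M count_space UNIV \<rightarrow>\<^sub>M subprob_algebra borel"
    and pi0_pos: "\<And>x t a. x \<in> space px \<Longrightarrow> t \<in> {0..T} \<Longrightarrow> pi0 x t a > 0"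
    and pi0_sum: "\<And>x t. x \<in> space px \<Longrightarrow> t \<in> {0..T} \<Longrightarrow> (\<Sum>a\<in>UNIV. pi0 x t a) = 1"
    and pi0_meas: "\<And>a. (\<lambda>(x, t). pi0 x t a) \<in> borel_measurable (px \<Otimes>\<^sub>M borel)"
    and pi_nonneg: "\<And>z x t a. x \<in> space px \<Longrightarrow> t \<ge> 0 \<Longrightarrow> pi_fun z x t a \<ge> 0"
    and pi_sum: "\<And>z x t. x \<in> space px \<Longrightarrow> t \<ge> 0 \<Longrightarrow> (\<Sum>a\<in>UNIV. pi_fun z x t a) = 1"
    and pi_meas: "\<And>z a. (\<lambda>(x, t). pi_fun z x t a) \<in> borel_measurable (px \<Otimes>\<^sub>M borel)"
    and pi_diff: "\<And>x t a. x \<in> space px \<Longrightarrow> t \<ge> 0 \<Longrightarrow>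
                    (\<lambda>z. pi_fun z x t a) differentiable (at \<zeta>)"
    and score: "\<And>x t a. x \<in> space px \<Longrightarrow> t \<ge> 0 \<Longrightarrow> pi_fun \<zeta> x t a > 0 \<Longrightarrow>
                  ((\<lambda>h. ln (pi_fun (\<zeta> + h *\<^sub>R axis j 1) x t a)) has_real_derivative s x t a) (at 0)"
    and s_meas: "\<And>a. (\<lambda>(x, t). s x t a) \<in> borel_measurable (px \<Otimes>\<^sub>M borel)"
    and fhat_meas: "\<And>a. (\<lambda>(x, t). fhat x t a) \<in> borel_measurable (px \<Otimes>\<^sub>M borel)"
    and phi_meas: "{u. \<phi> u = \<phi> t'} \<in> sets borel"
    and P_pos: "P > 0"
    and shift: "\<And>x t a. x \<in> space px \<Longrightarrow> t \<in> {0..T} \<Longrightarrow> \<phi> t = \<phi> t' \<Longrightarrow>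
                  q x t a - q x t' a = fhat x t a - fhat x t' a"
    and finite_var: "opfv_term pt T \<phi> t' pi0 piz fhat s \<in> borel_measurable M1"
       "integrable M1 (\<lambda>\<omega>. (opfv_term pt T \<phi> t' pi0 piz fhat s \<omega>)\<^sup>2)"
  shows "real n * Var (PiM {..<n} (\<lambda>_. M1)) (opfv_grad n pt T \<phi> t' pi0 piz fhat s)
       = Ex (px \<Otimes>\<^sub>M pt) (\<lambda>(x, t). \<Sum>a\<in>UNIV. pi0 x t a *
              ((w t * (piz x t' a / pi0 x t a) * s x t' a)\<^sup>2 * \<sigma>2 x t a))
       + Ex (px \<Otimes>\<^sub>M pt) (\<lambda>(x, t). (w t)\<^sup>2 *
              avar (pi0 x t) (\<lambda>a. piz x t' a / pi0 x t a * (q x t' a - fhat x t' a) * s x t' a))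
       + Var pt w * Ex px (\<lambda>x. (aexp (piz x t') (\<lambda>a. (q x t' a - fhat x t' a) * s x t' a))\<^sup>2)
       + Var px (\<lambda>x. aexp (piz x t') (\<lambda>a. q x t' a * s x t' a))"
proof -
  interpret px: prob_space px by (rule px)
  interpret pt: prob_space pt by (rule pt(1))
  interpret pp: pair_prob_space px pt by unfold_locales
  have spt: "space pt = UNIV" using sets_eq_imp_space_eq[OF pt(2)] by simp
  have sM: "sets (px \<Otimes>\<^sub>M pt) = sets (px \<Otimes>\<^sub>M borel)" using pt(2) by (intro sets_pair_measure_cong) auto
  have spM: "space (px \<Otimes>\<^sub>M pt) = space px \<times> UNIV" by (simp add: space_pair_measure spt)
  have measM: "\<And>f. f \<in> measurable (px \<Otimes>\<^sub>M borel) N \<Longrightarrow> f \<in> measurable (px \<Otimes>\<^sub>M pt) N" for N :: "'q measure"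
    using measurable_cong_sets[OF sM refl] by blast
  have T0: "0 \<le> T"
  proof (rule ccontr)
    assume "\<not> 0 \<le> T"
    then have "AE t in pt. False" using pt(3) by (auto elim: eventually_mono)
    then show False by simp
  qed
  define N4 :: "('x \<times> real \<times> 'a \<times> real) measure" where "N4 = px \<Otimes>\<^sub>M borel \<Otimes>\<^sub>M count_space UNIV \<Otimes>\<^sub>M borel"
  define K where "K = (\<lambda>x t. actdist (pi0 x t) \<bind> (\<lambda>a. distr (R x t a) N4 (\<lambda>r. (x, t, a, r))))"
  have M1_eq: "M1 = (px \<Otimes>\<^sub>M pt) \<bind> (\<lambda>z. K (fst z) (snd z))"
    unfolding M1_def sample_law_def K_def N4_def by (simp add: case_prod_beta')
  have hm: "\<And>x t a. x \<in> space px \<Longrightarrow> (\<lambda>r. (x, t, a, r)) \<in> borel \<rightarrow>\<^sub>M N4"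
    unfolding N4_def by measurable
  have Ksets: "\<And>x t. x \<in> space px \<Longrightarrow> sets (K x t) = sets N4"
    unfolding K_def by (rule K_sets[OF R_prob R_sets hm])
  have Kem: "\<And>x t X. x \<in> space px \<Longrightarrow> X \<in> sets N4 \<Longrightarrow> emeasure (K x t) X
      = (\<Sum>a\<in>UNIV. ennreal (pi0 x t a) * emeasure (distr (R x t a) N4 (\<lambda>r. (x, t, a, r))) X)"
  proof -
    fix x t X assume x: "x \<in> space px" and X: "X \<in> sets N4"
    have "emeasure (distr (R x t a) N4 (\<lambda>r. (x, t, a, r))) X = emeasure (R x t a) ((\<lambda>r. (x, t, a, r)) -` X)" for a
    proof -
      have hm': "(\<lambda>r. (x, t, a, r)) \<in> R x t a \<rightarrow>\<^sub>M N4" using hm[OF x] R_sets by (simp cong: measurable_cong_sets)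
      have sp: "space (R x t a) = UNIV" using sets_eq_imp_space_eq[OF R_sets[of x t a]] by simp
      show ?thesis using emeasure_distr[OF hm' X] sp by simp
    qed
    then show "emeasure (K x t) X
      = (\<Sum>a\<in>UNIV. ennreal (pi0 x t a) * emeasure (distr (R x t a) N4 (\<lambda>r. (x, t, a, r))) X)"
      unfolding K_def using K_emeasure[OF R_prob R_sets hm[OF x] X] by simp
  qed
  have Dmeas: "(\<lambda>za. distr (R (fst (fst za)) (snd (fst za)) (snd za)) N4 (\<lambda>r. (fst (fst za), snd (fst za), snd za, r)))
      \<in> measurable ((px \<Otimes>\<^sub>M borel) \<Otimes>\<^sub>M count_space UNIV) (subprob_algebra N4)"
  proof (rule measurable_distr2[where M=borel])
    show "(\<lambda>(za, r). (fst (fst za), snd (fst za), snd za, r)) \<in> measurable (((px \<Otimes>\<^sub>M borel) \<Otimes>\<^sub>M count_space UNIV) \<Otimes>\<^sub>M borel) N4"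
      unfolding N4_def by measurable
    have "(\<lambda>za. (fst (fst za), snd (fst za), snd za)) \<in> measurable ((px \<Otimes>\<^sub>M borel) \<Otimes>\<^sub>M count_space UNIV) (px \<Otimes>\<^sub>M borel \<Otimes>\<^sub>M count_space UNIV)"
      by measurable
    from measurable_compose[OF this R_meas]
    show "(\<lambda>za. R (fst (fst za)) (snd (fst za)) (snd za)) \<in> measurable ((px \<Otimes>\<^sub>M borel) \<Otimes>\<^sub>M count_space UNIV) (subprob_algebra borel)"
      by simp
  qed
  have Demeas: "\<And>X (a::'a). X \<in> sets N4 \<Longrightarrow> (\<lambda>z. emeasure (distr (R (fst z) (snd z) a) N4 (\<lambda>r. (fst z, snd z, a, r))) X) \<in> borel_measurable (px \<Otimes>\<^sub>M borel)"
  proof -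
    fix X and a :: 'a assume X: "X \<in> sets N4"
    have "(\<lambda>z. (z, a)) \<in> measurable (px \<Otimes>\<^sub>M borel) ((px \<Otimes>\<^sub>M borel) \<Otimes>\<^sub>M count_space UNIV)" by measurable
    from measurable_compose[OF measurable_compose[OF this Dmeas] measurable_emeasure_subprob_algebra[OF X]]
    show "(\<lambda>z. emeasure (distr (R (fst z) (snd z) a) N4 (\<lambda>r. (fst z, snd z, a, r))) X) \<in> borel_measurable (px \<Otimes>\<^sub>M borel)"
      by simp
  qed
  have pi0m: "\<And>a. (\<lambda>z. pi0 (fst z) (snd z) a) \<in> borel_measurable (px \<Otimes>\<^sub>M borel)"
    using pi0_meas by (simp add: case_prod_beta')
  have Kemeas: "\<And>X. X \<in> sets N4 \<Longrightarrow> (\<lambda>z. emeasure (K (fst z) (snd z)) X) \<in> borel_measurable (px \<Otimes>\<^sub>M pt)"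
  proof -
    fix X assume X: "X \<in> sets N4"
    have "(\<lambda>z. \<Sum>a\<in>UNIV. ennreal (pi0 (fst z) (snd z) a) * emeasure (distr (R (fst z) (snd z) a) N4 (\<lambda>r. (fst z, snd z, a, r))) X)
        \<in> borel_measurable (px \<Otimes>\<^sub>M borel)"
      using pi0m Demeas[OF X] by measurable
    then have "(\<lambda>z. \<Sum>a\<in>UNIV. ennreal (pi0 (fst z) (snd z) a) * emeasure (distr (R (fst z) (snd z) a) N4 (\<lambda>r. (fst z, snd z, a, r))) X)
        \<in> borel_measurable (px \<Otimes>\<^sub>M pt)" by (rule measM)
    then show "(\<lambda>z. emeasure (K (fst z) (snd z)) X) \<in> borel_measurable (px \<Otimes>\<^sub>M pt)"
      by (rule measurable_cong[THEN iffD1, rotated]) (auto simp: spM Kem X)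
  qed

  define Kz where "Kz = (\<lambda>z. K (fst z) (snd z))"
  define S1 where "S1 = {z \<in> space (px \<Otimes>\<^sub>M pt). emeasure (Kz z) (space N4) \<le> 1}"
  have S1m: "S1 \<in> sets (px \<Otimes>\<^sub>M pt)"
    using Kemeas[OF sets.top[of N4]] unfolding S1_def Kz_def by measurable
  have spN4: "space N4 = space px \<times> UNIV" unfolding N4_def by (simp add: space_pair_measure)
  have spK: "\<And>x t. x \<in> space px \<Longrightarrow> space (K x t) = space N4"
    using Ksets by (rule sets_eq_imp_space_eq)
  have Kz_meas: "Kz \<in> measurable (restrict_space (px \<Otimes>\<^sub>M pt) S1) (subprob_algebra N4)"
  proof (rule measurable_subprob_algebra)
    fix z assume z: "z \<in> space (restrict_space (px \<Otimes>\<^sub>M pt) S1)"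
    then have z1: "z \<in> S1" and z2: "fst z \<in> space px" by (auto simp: space_restrict_space S1_def spM)
    show "subprob_space (Kz z)"
    proof (rule subprob_spaceI)
      show "emeasure (Kz z) (space (Kz z)) \<le> 1" using z1 spK[OF z2] by (simp add: S1_def Kz_def)
      show "space (Kz z) \<noteq> {}" using spK[OF z2] z2 by (auto simp: Kz_def spN4)
    qed
    show "sets (Kz z) = sets N4" using Ksets[OF z2] by (simp add: Kz_def)
  next
    fix A assume "A \<in> sets N4"
    from Kemeas[OF this] show "(\<lambda>z. emeasure (Kz z) A) \<in> borel_measurable (restrict_space (px \<Otimes>\<^sub>M pt) S1)"
      unfolding Kz_def by (rule measurable_restrict_space1)
  qed
  have mass1: "\<And>x t. x \<in> space px \<Longrightarrow> t \<in> {0..T} \<Longrightarrow> emeasure (K x t) (space N4) = 1"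
  proof -
    fix x t assume x: "x \<in> space px" and t: "t \<in> {0..T}"
    have "emeasure (distr (R x t a) N4 (\<lambda>r. (x, t, a, r))) (space N4) = 1" for a
    proof -
      have hm': "(\<lambda>r. (x, t, a, r)) \<in> R x t a \<rightarrow>\<^sub>M N4" using hm[OF x] R_sets by (simp cong: measurable_cong_sets)
      interpret prob_space "R x t a" by (rule R_prob)
      have "prob_space (distr (R x t a) N4 (\<lambda>r. (x, t, a, r)))" by (rule prob_space_distr[OF hm'])
      then show ?thesis using prob_space.emeasure_space_1 by force
    qed
    then have "emeasure (K x t) (space N4) = (\<Sum>a\<in>UNIV. ennreal (pi0 x t a))"
      using Kem[OF x sets.top] by simp
    also have "\<dots> = ennreal (\<Sum>a\<in>UNIV. pi0 x t a)"
      using pi0_pos[OF x t] by (intro sum_ennreal) (auto intro: less_imp_le)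
    also have "\<dots> = 1" using pi0_sum[OF x t] by simp
    finally show "emeasure (K x t) (space N4) = 1" .
  qed
  define c where "c = (\<lambda>z::'x \<times> real. (fst z, if snd z \<in> {0..T} then snd z else 0))"
  have c_in: "\<And>z. z \<in> space (px \<Otimes>\<^sub>M pt) \<Longrightarrow> c z \<in> space (px \<Otimes>\<^sub>M pt) \<and> snd (c z) \<in> {0..T}"
    using T0 by (auto simp: c_def spM)
  have c_meas0: "c \<in> measurable (px \<Otimes>\<^sub>M borel) (px \<Otimes>\<^sub>M borel)" unfolding c_def by measurable
  have c_meas1: "c \<in> measurable (px \<Otimes>\<^sub>M pt) (px \<Otimes>\<^sub>M pt)"
    using c_meas0 measurable_cong_sets[OF sM sM] by blast
  have c_meas: "c \<in> measurable (px \<Otimes>\<^sub>M pt) (restrict_space (px \<Otimes>\<^sub>M pt) S1)"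
  proof (rule measurable_restrict_space2[OF _ c_meas1])
    show "c \<in> space (px \<Otimes>\<^sub>M pt) \<rightarrow> S1"
    proof
      fix z assume z: "z \<in> space (px \<Otimes>\<^sub>M pt)"
      from c_in[OF z] have "fst (c z) \<in> space px" "snd (c z) \<in> {0..T}" "c z \<in> space (px \<Otimes>\<^sub>M pt)"
        by (auto simp: spM)
      then show "c z \<in> S1" using mass1 by (simp add: S1_def Kz_def)
    qed
  qed
  define Kc where "Kc = (\<lambda>z. Kz (c z))"
  have Kc_meas: "Kc \<in> measurable (px \<Otimes>\<^sub>M pt) (subprob_algebra N4)"
    unfolding Kc_def by (rule measurable_compose[OF c_meas Kz_meas])
  have AE_T: "AE z in px \<Otimes>\<^sub>M pt. snd z \<in> {0..T}"
  proof (rule pp.AE_pair_measure)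
    have "{z \<in> space (px \<Otimes>\<^sub>M pt). snd z \<in> {0..T}} = space px \<times> {0..T}" by (auto simp: spM)
    moreover have "space px \<times> {0..T} \<in> sets (px \<Otimes>\<^sub>M pt)" using pt(2) by (intro pair_measureI) auto
    ultimately show "{z \<in> space (px \<Otimes>\<^sub>M pt). snd z \<in> {0..T}} \<in> sets (px \<Otimes>\<^sub>M pt)" by simp
    show "AE x in px. AE y in pt. snd (x, y) \<in> {0..T}" using pt(3) by simp
  qed
  have Kc_eq: "\<And>z. snd z \<in> {0..T} \<Longrightarrow> Kc z = K (fst z) (snd z)"
    by (simp add: Kc_def Kz_def c_def)
  have M1_eq2: "M1 = (px \<Otimes>\<^sub>M pt) \<bind> Kc"
    unfolding M1_eq Kz_def[symmetric]
  proof (rule bind_eq_partial[OF Kz_meas S1m _ Kc_meas])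
    fix z assume z: "z \<in> space (px \<Otimes>\<^sub>M pt)" and "Kz z \<in> space (subprob_algebra N4)"
    then have ss: "subprob_space (Kz z)" and se: "sets (Kz z) = sets N4" by (auto simp: space_subprob_algebra)
    have "emeasure (Kz z) (space (Kz z)) \<le> 1" using ss by (rule subprob_space.emeasure_space_le_1)
    moreover have "space (Kz z) = space N4" using se by (rule sets_eq_imp_space_eq)
    ultimately show "z \<in> S1" using z unfolding S1_def by simp
  next
    show "AE z in px \<Otimes>\<^sub>M pt. Kz z = Kc z" using AE_T
    proof (rule eventually_mono)
      fix z :: "'x \<times> real" assume "snd z \<in> {0..T}"
      then show "Kz z = Kc z" using Kc_eq[of z] by (simp add: Kz_def)
    qed
  next
    fix z assume "z \<in> space (px \<Otimes>\<^sub>M pt)"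
    then show "sets (Kz z) = sets N4" using Ksets by (auto simp: Kz_def spM)
  qed
  have Kc_prob: "\<And>z. z \<in> space (px \<Otimes>\<^sub>M pt) \<Longrightarrow> prob_space (Kc z)"
  proof -
    fix z assume z: "z \<in> space (px \<Otimes>\<^sub>M pt)"
    from c_in[OF z] have "fst (c z) \<in> space px" "snd (c z) \<in> {0..T}" by (auto simp: spM)
    then show "prob_space (Kc z)" using mass1 spK by (intro prob_spaceI) (simp add: Kc_def Kz_def)
  qed
  have M1_prob: "prob_space M1"
    unfolding M1_eq2 by (rule pp.prob_space_bind[OF _ Kc_meas]) (auto intro: AE_I2 Kc_prob)
  have M1_sets: "sets M1 = sets N4"
    unfolding M1_eq2 by (rule sets_bind_measurable[OF Kc_meas]) (simp add: spM px.not_empty)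

  have Rk: "\<And>a. (\<lambda>z. R (fst z) (snd z) a) \<in> measurable (px \<Otimes>\<^sub>M borel) (subprob_algebra borel)"
  proof -
    fix a :: 'a
    have "(\<lambda>z. (fst z, snd z, a)) \<in> measurable (px \<Otimes>\<^sub>M borel) (px \<Otimes>\<^sub>M borel \<Otimes>\<^sub>M count_space UNIV)"
      by measurable
    from measurable_compose[OF this R_meas]
    show "(\<lambda>z. R (fst z) (snd z) a) \<in> measurable (px \<Otimes>\<^sub>M borel) (subprob_algebra borel)" by simp
  qed
  have qm[measurable]: "\<And>a. (\<lambda>z. q (fst z) (snd z) a) \<in> borel_measurable (px \<Otimes>\<^sub>M borel)"
    unfolding q_def Ex_def
    by (rule measurable_compose[OF Rk integral_measurable_subprob_algebra]) simp
  have tpm: "(\<lambda>x. (x, t')) \<in> measurable px (px \<Otimes>\<^sub>M borel)" by measurable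
  have qm'[measurable]: "\<And>a. (\<lambda>x. q x t' a) \<in> borel_measurable px"
    using measurable_compose[OF tpm qm] by simp
  have \<sigma>m[measurable]: "\<And>a. (\<lambda>z. \<sigma>2 (fst z) (snd z) a) \<in> borel_measurable (px \<Otimes>\<^sub>M borel)"
  proof -
    fix a :: 'a
    have Dk: "(\<lambda>z. distr (R (fst z) (snd z) a) borel (\<lambda>r. (r - q (fst z) (snd z) a)\<^sup>2))
        \<in> measurable (px \<Otimes>\<^sub>M borel) (subprob_algebra borel)"
    proof (rule measurable_distr2[where M=borel])
      show "(\<lambda>(z, r). (r - q (fst z) (snd z) a)\<^sup>2) \<in> measurable ((px \<Otimes>\<^sub>M borel) \<Otimes>\<^sub>M borel) borel"
        by measurable
      show "(\<lambda>z. R (fst z) (snd z) a) \<in> measurable (px \<Otimes>\<^sub>M borel) (subprob_algebra borel)" by (rule Rk)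
    qed
    have "(\<lambda>z. integral\<^sup>L (distr (R (fst z) (snd z) a) borel (\<lambda>r. (r - q (fst z) (snd z) a)\<^sup>2)) (\<lambda>u. u))
        \<in> borel_measurable (px \<Otimes>\<^sub>M borel)"
      by (rule measurable_compose[OF Dk integral_measurable_subprob_algebra]) simp
    moreover have "integral\<^sup>L (distr (R (fst z) (snd z) a) borel (\<lambda>r. (r - q (fst z) (snd z) a)\<^sup>2)) (\<lambda>u. u)
        = \<sigma>2 (fst z) (snd z) a" for z
    proof -
      have "(\<lambda>r. (r - q (fst z) (snd z) a)\<^sup>2) \<in> measurable (R (fst z) (snd z) a) borel"
        using R_sets by (simp cong: measurable_cong_sets)
      then show ?thesis
        by (subst integral_distr) (auto simp: \<sigma>2_def q_def Var_def)
    qed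
    ultimately show "(\<lambda>z. \<sigma>2 (fst z) (snd z) a) \<in> borel_measurable (px \<Otimes>\<^sub>M borel)" by simp
  qed
  have pizm[measurable]: "\<And>a. (\<lambda>x. piz x t' a) \<in> borel_measurable px"
    using measurable_compose[OF tpm pi_meas] by (simp add: piz_def)
  have sm[measurable]: "\<And>a. (\<lambda>x. s x t' a) \<in> borel_measurable px"
    using measurable_compose[OF tpm s_meas] by simp
  have fhm[measurable]: "\<And>a. (\<lambda>x. fhat x t' a) \<in> borel_measurable px"
    using measurable_compose[OF tpm fhat_meas] by simp
  have fhz[measurable]: "\<And>a. (\<lambda>z. fhat (fst z) (snd z) a) \<in> borel_measurable (px \<Otimes>\<^sub>M borel)"
    using fhat_meas by (simp add: case_prod_beta')
  note pi0m[measurable]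
  have w_ind: "w = (\<lambda>t. indicator {u. \<phi> u = \<phi> t'} t / P)"
    by (auto simp: w_def P_def fun_eq_iff indicator_def)
  have wm[measurable]: "w \<in> borel_measurable borel"
    unfolding w_ind using phi_meas by measurable
  define G where "G = (\<lambda>x. aexp (piz x t') (\<lambda>b. fhat x t' b * s x t' b))"
  define H where "H = (\<lambda>x. aexp (piz x t') (\<lambda>a. (q x t' a - fhat x t' a) * s x t' a))"
  define m where "m = (\<lambda>x. aexp (piz x t') (\<lambda>a. q x t' a * s x t' a))"
  define Af where "Af = (\<lambda>x t. \<Sum>a\<in>UNIV. pi0 x t a * ((w t * (piz x t' a / pi0 x t a) * s x t' a)\<^sup>2 * \<sigma>2 x t a))"
  define Vf where "Vf = (\<lambda>x t. avar (pi0 x t) (\<lambda>a. piz x t' a / pi0 x t a * (q x t' a - fhat x t' a) * s x t' a))"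
  have Gm[measurable]: "G \<in> borel_measurable px" unfolding G_def aexp_def by measurable
  have Hm[measurable]: "H \<in> borel_measurable px" unfolding H_def aexp_def by measurable
  have mm[measurable]: "m \<in> borel_measurable px" unfolding m_def aexp_def by measurable
  have Afm0: "(\<lambda>z. Af (fst z) (snd z)) \<in> borel_measurable (px \<Otimes>\<^sub>M borel)" unfolding Af_def by measurable
  have Vfm0: "(\<lambda>z. Vf (fst z) (snd z)) \<in> borel_measurable (px \<Otimes>\<^sub>M borel)" unfolding Vf_def avar_def aexp_def by measurable
  have Afm[measurable]: "(\<lambda>z. Af (fst z) (snd z)) \<in> borel_measurable (px \<Otimes>\<^sub>M pt)" using Afm0 by (rule measM)
  have Vfm[measurable]: "(\<lambda>z. Vf (fst z) (snd z)) \<in> borel_measurable (px \<Otimes>\<^sub>M pt)" using Vfm0 by (rule measM)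
  have wm2[measurable]: "w \<in> borel_measurable pt" using wm pt(2) by (simp cong: measurable_cong_sets)
  have mHG: "\<And>x. m x = H x + G x"
    by (simp add: m_def H_def G_def aexp_def sum.distrib[symmetric] algebra_simps)

  define Y where "Y = opfv_term pt T \<phi> t' pi0 piz fhat s"
  have Ym[measurable]: "Y \<in> borel_measurable N4"
    using finite_var(1) M1_sets unfolding Y_def by (simp cong: measurable_cong_sets)
  interpret M1: prob_space M1 by (rule M1_prob)
  have Y2i: "integrable M1 (\<lambda>\<omega>. (Y \<omega>)\<^sup>2)" using finite_var(2) by (simp add: Y_def)
  have Ym1: "Y \<in> borel_measurable M1" using Ym M1_sets by (simp cong: measurable_cong_sets)
  have Y1i: "integrable M1 Y" by (rule M1.square_integrable_imp_integrable[OF Ym1 Y2i])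
  define c1 where "c1 = (\<lambda>x t a. w t * (piz x t' a / pi0 x t a) * s x t' a)"
  define c0 where "c0 = (\<lambda>x t a. G x - c1 x t a * fhat x t a)"
  define gg where "gg = (\<lambda>x t a. piz x t' a / pi0 x t a * (q x t' a - fhat x t' a) * s x t' a)"
  have Y_eq0: "\<And>x t a r. Y (x, t, a, r) = w t * (piz x t' a / pi0 x t a) * (r - fhat x t a) * s x t' a + G x"
    by (simp add: Y_def opfv_term_def w_def G_def)
  have Y_eq: "\<And>x t a r. Y (x, t, a, r) = c1 x t a * r + c0 x t a"
    unfolding Y_eq0 c1_def c0_def by (simp add: right_diff_distrib left_diff_distrib mult_ac diff_divide_distrib)
  have percomp: "\<And>x t a. x \<in> space px \<Longrightarrow> t \<in> {0..T} \<Longrightarrow> c1 x t a * q x t a + c0 x t a = w t * gg x t a + G x"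
  proof -
    fix x t a assume x: "x \<in> space px" and t: "t \<in> {0..T}"
    show "c1 x t a * q x t a + c0 x t a = w t * gg x t a + G x"
    proof (cases "\<phi> t = \<phi> t'")
      case True
      have "q x t a - fhat x t a = q x t' a - fhat x t' a" using shift[OF x t True, of a] by linarith
      then have "c1 x t a * (q x t a - fhat x t a) = w t * gg x t a"
        by (simp add: c1_def gg_def)
      then show ?thesis by (simp add: c0_def algebra_simps)
    next
      case False
      then show ?thesis by (simp add: c0_def c1_def w_def)
    qed
  qed
  have pi0g: "\<And>x t. x \<in> space px \<Longrightarrow> t \<in> {0..T} \<Longrightarrow> aexp (pi0 x t) (gg x t) = H x"
  proof -
    fix x t assume x: "x \<in> space px" and t: "t \<in> {0..T}"
    have "pi0 x t a * gg x t a = piz x t' a * ((q x t' a - fhat x t' a) * s x t' a)" for a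
      using pi0_pos[OF x t, of a] by (simp add: gg_def field_simps)
    then show "aexp (pi0 x t) (gg x t) = H x" by (simp add: aexp_def H_def)
  qed
  have inner: "\<And>x t f. x \<in> space px \<Longrightarrow> t \<in> {0..T} \<Longrightarrow> f \<in> borel_measurable N4 \<Longrightarrow> integrable (K x t) f \<Longrightarrow>
      integral\<^sup>L (K x t) f = (\<Sum>a\<in>UNIV. pi0 x t a * integral\<^sup>L (R x t a) (\<lambda>r. f (x, t, a, r)))"
  proof -
    fix x t and f :: "'x \<times> real \<times> 'a \<times> real \<Rightarrow> real"
    assume x: "x \<in> space px" and t: "t \<in> {0..T}" and f: "f \<in> borel_measurable N4" and i: "integrable (K x t) f"
    show "integral\<^sup>L (K x t) f = (\<Sum>a\<in>UNIV. pi0 x t a * integral\<^sup>L (R x t a) (\<lambda>r. f (x, t, a, r)))"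
      using K_integral[OF R_prob R_sets hm[OF x] _ f, of "pi0 x t"] i pi0_pos[OF x t]
      unfolding K_def by (simp add: less_imp_le)
  qed
  have Rb: "\<And>x t a. x \<in> space px \<Longrightarrow> t \<in> {0..T} \<Longrightarrow> AE r in R x t a. 0 \<le> r \<and> r \<le> r_max"
    using R_bounded by auto
  have innerY: "\<And>x t. x \<in> space px \<Longrightarrow> t \<in> {0..T} \<Longrightarrow> integrable (K x t) Y \<Longrightarrow>
      integral\<^sup>L (K x t) Y = w t * H x + G x"
  proof -
    fix x t assume x: "x \<in> space px" and t: "t \<in> {0..T}" and i: "integrable (K x t) Y"
    have "integral\<^sup>L (K x t) Y = (\<Sum>a\<in>UNIV. pi0 x t a * (c1 x t a * q x t a + c0 x t a))"
      using R_moments(1)[OF R_prob R_sets Rb[OF x t]] by (simp add: inner[OF x t Ym i] Y_eq q_def)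
    also have "\<dots> = (\<Sum>a\<in>UNIV. pi0 x t a * (w t * gg x t a + G x))"
      using percomp[OF x t] by simp
    also have "\<dots> = w t * aexp (pi0 x t) (gg x t) + G x * (\<Sum>a\<in>UNIV. pi0 x t a)"
      by (simp add: aexp_def algebra_simps sum.distrib sum_distrib_left)
    also have "\<dots> = w t * H x + G x" using pi0g[OF x t] pi0_sum[OF x t] by simp
    finally show "integral\<^sup>L (K x t) Y = w t * H x + G x" .
  qed
  have innerY2: "\<And>x t. x \<in> space px \<Longrightarrow> t \<in> {0..T} \<Longrightarrow> integrable (K x t) (\<lambda>\<omega>. (Y \<omega>)\<^sup>2) \<Longrightarrow>
      integral\<^sup>L (K x t) (\<lambda>\<omega>. (Y \<omega>)\<^sup>2) = Af x t + (w t)\<^sup>2 * Vf x t + (w t * H x + G x)\<^sup>2"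
  proof -
    fix x t assume x: "x \<in> space px" and t: "t \<in> {0..T}" and i: "integrable (K x t) (\<lambda>\<omega>. (Y \<omega>)\<^sup>2)"
    have "integral\<^sup>L (K x t) (\<lambda>\<omega>. (Y \<omega>)\<^sup>2)
        = (\<Sum>a\<in>UNIV. pi0 x t a * ((c1 x t a)\<^sup>2 * \<sigma>2 x t a + (c1 x t a * q x t a + c0 x t a)\<^sup>2))"
      using R_moments(2)[OF R_prob R_sets Rb[OF x t]] by (simp add: inner[OF x t _ i] Y_eq q_def \<sigma>2_def)
    also have "\<dots> = Af x t + (\<Sum>a\<in>UNIV. pi0 x t a * (w t * gg x t a + G x)\<^sup>2)"
      using percomp[OF x t] by (simp add: Af_def c1_def algebra_simps sum.distrib)
    also have "\<dots> = Af x t + ((w t)\<^sup>2 * avar (pi0 x t) (gg x t) + (w t * aexp (pi0 x t) (gg x t) + G x)\<^sup>2)"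
      using avar_decomp[OF pi0_sum[OF x t]] by simp
    also have "\<dots> = Af x t + (w t)\<^sup>2 * Vf x t + (w t * H x + G x)\<^sup>2"
      using pi0g[OF x t] by (simp add: Vf_def gg_def)
    finally show "integral\<^sup>L (K x t) (\<lambda>\<omega>. (Y \<omega>)\<^sup>2) = Af x t + (w t)\<^sup>2 * Vf x t + (w t * H x + G x)\<^sup>2" .
  qed

  define F1 where "F1 = (\<lambda>z. w (snd z) * H (fst z) + G (fst z))"
  define F2 where "F2 = (\<lambda>z. Af (fst z) (snd z) + (w (snd z))\<^sup>2 * Vf (fst z) (snd z) + (F1 z)\<^sup>2)"
  have F1m[measurable]: "F1 \<in> borel_measurable (px \<Otimes>\<^sub>M pt)" unfolding F1_def by measurable
  have F2m[measurable]: "F2 \<in> borel_measurable (px \<Otimes>\<^sub>M pt)" unfolding F2_def by measurable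
  have Y2m[measurable]: "(\<lambda>\<omega>. (Y \<omega>)\<^sup>2) \<in> borel_measurable N4" by measurable
  have Y1b: "integrable ((px \<Otimes>\<^sub>M pt) \<bind> Kc) Y" using Y1i M1_eq2 by simp
  have Y2b: "integrable ((px \<Otimes>\<^sub>M pt) \<bind> Kc) (\<lambda>\<omega>. (Y \<omega>)\<^sup>2)" using Y2i M1_eq2 by simp
  note B = bind_integral[OF Kc_meas Ym Y1b] bind_integral[OF Kc_meas Y2m Y2b]
  have AE1: "AE z in px \<Otimes>\<^sub>M pt. integral\<^sup>L (Kc z) Y = F1 z"
    using B(1) AE_T AE_space
  proof (eventually_elim)
    case (elim z)
    then have z1: "fst z \<in> space px" by (auto simp: spM)
    from elim show ?case using innerY[OF z1 _] Kc_eq[of z] by (simp add: F1_def)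
  qed
  have AE2: "AE z in px \<Otimes>\<^sub>M pt. integral\<^sup>L (Kc z) (\<lambda>\<omega>. (Y \<omega>)\<^sup>2) = F2 z"
    using B(4) AE_T AE_space
  proof (eventually_elim)
    case (elim z)
    then have z1: "fst z \<in> space px" by (auto simp: spM)
    from elim show ?case using innerY2[OF z1 _] Kc_eq[of z] by (simp add: F2_def F1_def)
  qed
  have I1m: "(\<lambda>z. integral\<^sup>L (Kc z) Y) \<in> borel_measurable (px \<Otimes>\<^sub>M pt)"
    using B(2) by (rule borel_measurable_integrable)
  have I2m: "(\<lambda>z. integral\<^sup>L (Kc z) (\<lambda>\<omega>. (Y \<omega>)\<^sup>2)) \<in> borel_measurable (px \<Otimes>\<^sub>M pt)"
    using B(5) by (rule borel_measurable_integrable)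
  have F1i: "integrable (px \<Otimes>\<^sub>M pt) F1" using integrable_cong_AE[OF I1m F1m AE1] B(2) by simp
  have F2i: "integrable (px \<Otimes>\<^sub>M pt) F2" using integrable_cong_AE[OF I2m F2m AE2] B(5) by simp
  have EY: "integral\<^sup>L M1 Y = integral\<^sup>L (px \<Otimes>\<^sub>M pt) F1"
    using B(3) integral_cong_AE[OF I1m F1m AE1] M1_eq2 by simp
  have EY2: "integral\<^sup>L M1 (\<lambda>\<omega>. (Y \<omega>)\<^sup>2) = integral\<^sup>L (px \<Otimes>\<^sub>M pt) F2"
    using B(6) integral_cong_AE[OF I2m F2m AE2] M1_eq2 by simp
  have VarY: "Var M1 Y = integral\<^sup>L (px \<Otimes>\<^sub>M pt) F2 - (integral\<^sup>L (px \<Otimes>\<^sub>M pt) F1)\<^sup>2"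
    using M1.variance_eq[OF Y1i Y2i] EY EY2 by (simp add: Var_def Ex_def)
  have LHS: "real n * Var (PiM {..<n} (\<lambda>_. M1)) (opfv_grad n pt T \<phi> t' pi0 piz fhat s) = Var M1 Y"
  proof -
    have "opfv_grad n pt T \<phi> t' pi0 piz fhat s = (\<lambda>D. (1 / real n) * (\<Sum>i<n. Y (D i)))"
      by (simp add: fun_eq_iff opfv_grad_def Y_def)
    then show ?thesis using iid_var[OF M1_prob Ym1 Y2i n_pos] by simp
  qed

  have \<sigma>2nn: "\<And>x t a. 0 \<le> \<sigma>2 x t a" by (simp add: \<sigma>2_def Var_def integral_nonneg)
  have Afnn: "\<And>x t. x \<in> space px \<Longrightarrow> t \<in> {0..T} \<Longrightarrow> 0 \<le> Af x t"
    unfolding Af_def using pi0_pos \<sigma>2nn by (intro sum_nonneg mult_nonneg_nonneg) (auto intro: less_imp_le)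
  have Vfnn: "\<And>x t. x \<in> space px \<Longrightarrow> t \<in> {0..T} \<Longrightarrow> 0 \<le> Vf x t"
    unfolding Vf_def avar_def using pi0_pos by (intro sum_nonneg mult_nonneg_nonneg) (auto intro: less_imp_le)
  have AE_pos: "AE z in px \<Otimes>\<^sub>M pt. fst z \<in> space px \<and> snd z \<in> {0..T}"
    using AE_T AE_space by eventually_elim (auto simp: spM)
  have WVm: "(\<lambda>z. (w (snd z))\<^sup>2 * Vf (fst z) (snd z)) \<in> borel_measurable (px \<Otimes>\<^sub>M pt)" by measurable
  have F1sqm: "(\<lambda>z. (F1 z)\<^sup>2) \<in> borel_measurable (px \<Otimes>\<^sub>M pt)" by measurable
  have AfI: "integrable (px \<Otimes>\<^sub>M pt) (\<lambda>z. Af (fst z) (snd z))"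
  proof (rule Bochner_Integration.integrable_bound[OF F2i])
    show "AE z in px \<Otimes>\<^sub>M pt. norm (Af (fst z) (snd z)) \<le> norm (F2 z)"
      using AE_pos by eventually_elim (use Afnn Vfnn in \<open>auto simp: F2_def\<close>)
  qed (rule Afm)
  have WVI: "integrable (px \<Otimes>\<^sub>M pt) (\<lambda>z. (w (snd z))\<^sup>2 * Vf (fst z) (snd z))"
  proof (rule Bochner_Integration.integrable_bound[OF F2i])
    show "AE z in px \<Otimes>\<^sub>M pt. norm ((w (snd z))\<^sup>2 * Vf (fst z) (snd z)) \<le> norm (F2 z)"
      using AE_pos by eventually_elim (use Afnn Vfnn in \<open>auto simp: F2_def\<close>)
  qed (rule WVm)
  have F1sqI: "integrable (px \<Otimes>\<^sub>M pt) (\<lambda>z. (F1 z)\<^sup>2)"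
  proof (rule Bochner_Integration.integrable_bound[OF F2i])
    show "AE z in px \<Otimes>\<^sub>M pt. norm ((F1 z)\<^sup>2) \<le> norm (F2 z)"
      using AE_pos by eventually_elim (use Afnn Vfnn in \<open>auto simp: F2_def\<close>)
  qed (rule F1sqm)
  have EF2: "integral\<^sup>L (px \<Otimes>\<^sub>M pt) F2 = integral\<^sup>L (px \<Otimes>\<^sub>M pt) (\<lambda>z. Af (fst z) (snd z))
      + integral\<^sup>L (px \<Otimes>\<^sub>M pt) (\<lambda>z. (w (snd z))\<^sup>2 * Vf (fst z) (snd z)) + integral\<^sup>L (px \<Otimes>\<^sub>M pt) (\<lambda>z. (F1 z)\<^sup>2)"
    unfolding F2_def using AfI WVI F1sqI by simp
  have R1: "Ex (px \<Otimes>\<^sub>M pt) (\<lambda>(x, t). \<Sum>a\<in>UNIV. pi0 x t a * ((w t * (piz x t' a / pi0 x t a) * s x t' a)\<^sup>2 * \<sigma>2 x t a))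
      = integral\<^sup>L (px \<Otimes>\<^sub>M pt) (\<lambda>z. Af (fst z) (snd z))"
    by (simp add: Ex_def Af_def case_prod_beta')
  have R2: "Ex (px \<Otimes>\<^sub>M pt) (\<lambda>(x, t). (w t)\<^sup>2 * avar (pi0 x t) (\<lambda>a. piz x t' a / pi0 x t a * (q x t' a - fhat x t' a) * s x t' a))
      = integral\<^sup>L (px \<Otimes>\<^sub>M pt) (\<lambda>z. (w (snd z))\<^sup>2 * Vf (fst z) (snd z))"
    by (simp add: Ex_def Vf_def case_prod_beta')
  have R3: "Ex px (\<lambda>x. (aexp (piz x t') (\<lambda>a. (q x t' a - fhat x t' a) * s x t' a))\<^sup>2) = integral\<^sup>L px (\<lambda>x. (H x)\<^sup>2)"
    by (simp add: Ex_def H_def)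
  have R4: "Var px (\<lambda>x. aexp (piz x t') (\<lambda>a. q x t' a * s x t' a)) = Var px m"
    by (simp add: m_def)
  define A where "A = {u. \<phi> u = \<phi> t'}"
  have Am: "A \<in> sets pt" using phi_meas pt(2) by (simp add: A_def)
  have PA: "measure pt A = P"
    unfolding P_def pphi_def A_def
  proof (rule measure_eq_AE)
    show "AE x in pt. (x \<in> {u. \<phi> u = \<phi> t'}) = (x \<in> {s \<in> {0..T}. \<phi> s = \<phi> t'})"
      using pt(3) by (rule eventually_mono) auto
    show "{u. \<phi> u = \<phi> t'} \<in> sets pt" using Am by (simp add: A_def)
    have "{s \<in> {0..T}. \<phi> s = \<phi> t'} = {0..T} \<inter> {u. \<phi> u = \<phi> t'}" by auto
    moreover have "{0..T} \<inter> {u. \<phi> u = \<phi> t'} \<in> sets pt" using Am pt(2) by (intro sets.Int) (auto simp: A_def)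
    ultimately show "{s \<in> {0..T}. \<phi> s = \<phi> t'} \<in> sets pt" by simp
  qed
  have P1: "P \<le> 1" using PA pt.prob_le_1[of A] by simp
  have w_ind2: "w = (\<lambda>t. indicator A t / P)" using w_ind by (simp add: A_def)
  have wsq: "(\<lambda>t. (w t)\<^sup>2) = (\<lambda>t. indicator A t / P\<^sup>2)"
    by (auto simp: w_ind2 fun_eq_iff indicator_def power2_eq_square)
  have IA: "integrable pt (indicator A :: real \<Rightarrow> real)" using Am by (intro integrable_real_indicator) (auto simp: pt.emeasure_eq_measure)
  have EA: "integral\<^sup>L pt (indicator A :: real \<Rightarrow> real) = P" using Am PA by simp
  have wi: "integrable pt w" unfolding w_ind2 using IA by simp
  have w2i: "integrable pt (\<lambda>t. (w t)\<^sup>2)" unfolding wsq using IA by simp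
  have Ew: "integral\<^sup>L pt w = 1" unfolding w_ind2 using EA P_pos by simp
  have Ew2: "integral\<^sup>L pt (\<lambda>t. (w t)\<^sup>2) = 1 / P" unfolding wsq using EA P_pos by (simp add: power2_eq_square)
  have Varw: "Var pt w = 1 / P - 1"
    using pt.variance_eq[OF wi w2i] Ew Ew2 by (simp add: Var_def Ex_def)
  have EF1: "integral\<^sup>L (px \<Otimes>\<^sub>M pt) F1 = integral\<^sup>L (px \<Otimes>\<^sub>M pt) F1" ..
  have main: "integral\<^sup>L (px \<Otimes>\<^sub>M pt) (\<lambda>z. (F1 z)\<^sup>2) - (integral\<^sup>L (px \<Otimes>\<^sub>M pt) F1)\<^sup>2
      = Var pt w * integral\<^sup>L px (\<lambda>x. (H x)\<^sup>2) + Var px m"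
  proof (cases "P = 1")
    case True
    have AEw: "AE t in pt. w t = 1"
    proof -
      have "{t \<in> space pt. \<phi> t = \<phi> t'} = A" by (auto simp: A_def spt)
      then have "pt.prob {t \<in> space pt. \<phi> t = \<phi> t'} = 1" using PA True by simp
      then have "AE t in pt. \<phi> t = \<phi> t'"
        using pt.prob_Collect_eq_1[of "\<lambda>t. \<phi> t = \<phi> t'"] Am by (simp add: A_def spt)
      then show ?thesis by (rule eventually_mono) (simp add: w_def P_def[symmetric] True)
    qed
    have AEw2: "AE z in px \<Otimes>\<^sub>M pt. w (snd z) = 1"
    proof (rule pp.AE_pair_measure)
      show "{z \<in> space (px \<Otimes>\<^sub>M pt). w (snd z) = 1} \<in> sets (px \<Otimes>\<^sub>M pt)" by measurable
      show "AE x in px. AE y in pt. w (snd (x, y)) = 1" using AEw by simp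
    qed
    have AEF: "AE z in px \<Otimes>\<^sub>M pt. F1 z = m (fst z)"
      using AEw2 by (rule eventually_mono) (simp add: F1_def mHG)
    have m2m: "(\<lambda>z. (m (fst z))\<^sup>2) \<in> borel_measurable (px \<Otimes>\<^sub>M pt)" by measurable
    have mfm: "(\<lambda>z. m (fst z)) \<in> borel_measurable (px \<Otimes>\<^sub>M pt)" by measurable
    have AEF2: "AE z in px \<Otimes>\<^sub>M pt. (F1 z)\<^sup>2 = (m (fst z))\<^sup>2"
      using AEF by (rule eventually_mono) simp
    have "integrable (px \<Otimes>\<^sub>M pt) (\<lambda>z. (m (fst z))\<^sup>2)"
      using integrable_cong_AE[OF F1sqm m2m AEF2] F1sqI by simp
    then have m2i: "integrable px (\<lambda>x. (m x)\<^sup>2)"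
      using prod_fst(1)[OF px pt(1), of "\<lambda>x. (m x)\<^sup>2"] by simp
    have mi: "integrable px m" by (rule px.square_integrable_imp_integrable[OF mm m2i])
    have e1: "integral\<^sup>L (px \<Otimes>\<^sub>M pt) (\<lambda>z. (F1 z)\<^sup>2) = integral\<^sup>L px (\<lambda>x. (m x)\<^sup>2)"
      using integral_cong_AE[OF F1sqm m2m AEF2] prod_fst(2)[OF px pt(1), of "\<lambda>x. (m x)\<^sup>2"] by simp
    have e2: "integral\<^sup>L (px \<Otimes>\<^sub>M pt) F1 = integral\<^sup>L px m"
      using integral_cong_AE[OF F1m mfm AEF] prod_fst(2)[OF px pt(1) mm] by simp
    have "Var px m = integral\<^sup>L px (\<lambda>x. (m x)\<^sup>2) - (integral\<^sup>L px m)\<^sup>2"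
      using px.variance_eq[OF mi m2i] by (simp add: Var_def Ex_def)
    then show ?thesis using e1 e2 Varw True by simp
  next
    case False
    then have Plt: "P < 1" using P1 by simp
    interpret pp2: pair_prob_space pt px by unfold_locales
    have sw: "integrable (pt \<Otimes>\<^sub>M px) (\<lambda>(x, y). (F1 (y, x))\<^sup>2)"
      using pp.integrable_product_swap[OF F1sqI] by simp
    have AEint: "AE t in pt. integrable px (\<lambda>x. (F1 (x, t))\<^sup>2)"
      using pp2.AE_integrable_fst'[OF sw] by simp
    have Am2: "{t \<in> space pt. \<phi> t = \<phi> t'} \<in> sets pt"
      using Am by (simp add: A_def spt)
    have Acm: "{t \<in> space pt. \<not> \<phi> t = \<phi> t'} \<in> sets pt"
    proof -
      have "{t \<in> space pt. \<not> \<phi> t = \<phi> t'} = space pt - A" by (auto simp: A_def)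
      then show ?thesis using Am by auto
    qed
    have pA: "pt.prob {t \<in> space pt. \<phi> t = \<phi> t'} = P"
      using PA by (simp add: A_def spt)
    have pAc: "pt.prob {t \<in> space pt. \<not> \<phi> t = \<phi> t'} = 1 - P"
    proof -
      have "{t \<in> space pt. \<not> \<phi> t = \<phi> t'} = space pt - A" by (auto simp: A_def)
      then show ?thesis using pt.prob_compl[OF Am] PA by simp
    qed
    obtain t0 where t0: "\<phi> t0 \<noteq> \<phi> t'" "integrable px (\<lambda>x. (F1 (x, t0))\<^sup>2)"
    proof (rule ccontr)
      assume "\<not> thesis"
      with that have "\<And>t. \<phi> t \<noteq> \<phi> t' \<Longrightarrow> \<not> integrable px (\<lambda>x. (F1 (x, t))\<^sup>2)" by blast
      then have "AE t in pt. \<not> \<not> \<phi> t = \<phi> t'" using AEint by (rule_tac eventually_mono[OF AEint]) auto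
      then have "pt.prob {t \<in> space pt. \<not> \<phi> t = \<phi> t'} = 0" using pt.prob_Collect_eq_0[OF Acm] by simp
      then show False using pAc Plt by simp
    qed
    obtain t1 where t1: "\<phi> t1 = \<phi> t'" "integrable px (\<lambda>x. (F1 (x, t1))\<^sup>2)"
    proof (rule ccontr)
      assume "\<not> thesis"
      with that have "\<And>t. \<phi> t = \<phi> t' \<Longrightarrow> \<not> integrable px (\<lambda>x. (F1 (x, t))\<^sup>2)" by blast
      then have "AE t in pt. \<not> \<phi> t = \<phi> t'" using AEint by (rule_tac eventually_mono[OF AEint]) auto
      then have "pt.prob {t \<in> space pt. \<phi> t = \<phi> t'} = 0" using pt.prob_Collect_eq_0[OF Am2] by simp
      then show False using pA P_pos by simp
    qed
    have G2i: "integrable px (\<lambda>x. (G x)\<^sup>2)" using t0 by (simp add: F1_def w_def)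
    define u where "u = (\<lambda>x. H x / P + G x)"
    have u2i: "integrable px (\<lambda>x. (u x)\<^sup>2)" using t1 by (simp add: F1_def w_def P_def[symmetric] u_def)
    have um: "u \<in> borel_measurable px" unfolding u_def by measurable
    have H2i: "integrable px (\<lambda>x. (H x)\<^sup>2)"
    proof (rule Bochner_Integration.integrable_bound[where f="\<lambda>x. 2 * P\<^sup>2 * ((u x)\<^sup>2 + (G x)\<^sup>2)"])
      show "integrable px (\<lambda>x. 2 * P\<^sup>2 * ((u x)\<^sup>2 + (G x)\<^sup>2))" using u2i G2i by simp
      show "(\<lambda>x. (H x)\<^sup>2) \<in> borel_measurable px" by measurable
      show "AE x in px. norm ((H x)\<^sup>2) \<le> norm (2 * P\<^sup>2 * ((u x)\<^sup>2 + (G x)\<^sup>2))"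
      proof (rule AE_I2)
        fix x
        have hx: "H x = P * (u x - G x)" using P_pos by (simp add: u_def field_simps)
        have "2 * ((u x)\<^sup>2 + (G x)\<^sup>2) - (u x - G x)\<^sup>2 = (u x + G x)\<^sup>2" by (simp add: power2_eq_square algebra_simps)
        then have "(u x - G x)\<^sup>2 \<le> 2 * ((u x)\<^sup>2 + (G x)\<^sup>2)" by (smt (verit) zero_le_power2)
        then have b: "P\<^sup>2 * (u x - G x)\<^sup>2 \<le> P\<^sup>2 * (2 * ((u x)\<^sup>2 + (G x)\<^sup>2))" by (rule mult_left_mono) simp
        have "(H x)\<^sup>2 = P\<^sup>2 * (u x - G x)\<^sup>2" unfolding hx by (rule power_mult_distrib)
        also have "\<dots> \<le> P\<^sup>2 * (2 * ((u x)\<^sup>2 + (G x)\<^sup>2))" by (rule b)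
        also have "\<dots> = 2 * P\<^sup>2 * ((u x)\<^sup>2 + (G x)\<^sup>2)" by simp
        finally have a: "(H x)\<^sup>2 \<le> 2 * P\<^sup>2 * ((u x)\<^sup>2 + (G x)\<^sup>2)" .
        have "0 \<le> 2 * P\<^sup>2 * ((u x)\<^sup>2 + (G x)\<^sup>2)" by simp
        then show "norm ((H x)\<^sup>2) \<le> norm (2 * P\<^sup>2 * ((u x)\<^sup>2 + (G x)\<^sup>2))"
          using a by simp
      qed
    qed
    have HGi: "integrable px (\<lambda>x. H x * G x)"
    proof (rule Bochner_Integration.integrable_bound[where f="\<lambda>x. (H x)\<^sup>2 + (G x)\<^sup>2"])
      show "integrable px (\<lambda>x. (H x)\<^sup>2 + (G x)\<^sup>2)" using H2i G2i by simp
      show "(\<lambda>x. H x * G x) \<in> borel_measurable px" by measurable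
      show "AE x in px. norm (H x * G x) \<le> norm ((H x)\<^sup>2 + (G x)\<^sup>2)"
      proof (rule AE_I2)
        fix x
        have "0 \<le> (\<bar>H x\<bar> - \<bar>G x\<bar>)\<^sup>2" by simp
        then have "2 * (\<bar>H x\<bar> * \<bar>G x\<bar>) \<le> (H x)\<^sup>2 + (G x)\<^sup>2" by (simp add: power2_eq_square algebra_simps)
        then have "\<bar>H x\<bar> * \<bar>G x\<bar> \<le> (H x)\<^sup>2 + (G x)\<^sup>2"
          using mult_nonneg_nonneg[OF abs_ge_zero abs_ge_zero, of "H x" "G x"] by linarith
        then show "norm (H x * G x) \<le> norm ((H x)\<^sup>2 + (G x)\<^sup>2)" by (simp add: abs_mult)
      qed
    qed
    have Hi: "integrable px H" by (rule px.square_integrable_imp_integrable[OF Hm H2i])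
    have Gi: "integrable px G" by (rule px.square_integrable_imp_integrable[OF Gm G2i])
    have meq: "\<And>x. (m x)\<^sup>2 = (H x)\<^sup>2 + 2 * (H x * G x) + (G x)\<^sup>2" by (simp add: mHG power2_eq_square algebra_simps)
    have m2i: "integrable px (\<lambda>x. (m x)\<^sup>2)" unfolding meq using H2i HGi G2i by simp
    have mi: "integrable px m" by (rule px.square_integrable_imp_integrable[OF mm m2i])
    have Vm: "Var px m = integral\<^sup>L px (\<lambda>x. (H x)\<^sup>2) + 2 * integral\<^sup>L px (\<lambda>x. H x * G x) + integral\<^sup>L px (\<lambda>x. (G x)\<^sup>2)
        - (integral\<^sup>L px H + integral\<^sup>L px G)\<^sup>2"
    proof -
      have "Var px m = integral\<^sup>L px (\<lambda>x. (m x)\<^sup>2) - (integral\<^sup>L px m)\<^sup>2"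
        using px.variance_eq[OF mi m2i] by (simp add: Var_def Ex_def)
      moreover have "integral\<^sup>L px (\<lambda>x. (m x)\<^sup>2) = integral\<^sup>L px (\<lambda>x. (H x)\<^sup>2) + 2 * integral\<^sup>L px (\<lambda>x. H x * G x) + integral\<^sup>L px (\<lambda>x. (G x)\<^sup>2)"
        unfolding meq using H2i HGi G2i by simp
      moreover have "integral\<^sup>L px m = integral\<^sup>L px H + integral\<^sup>L px G"
        unfolding mHG using Hi Gi by simp
      ultimately show ?thesis by simp
    qed
    note S1 = prod_sep[OF px pt(1) H2i w2i]
    note S2 = prod_sep[OF px pt(1) HGi wi]
    note S3 = prod_sep[OF px pt(1) Hi wi]
    note S4 = prod_fst[OF px pt(1), of "\<lambda>x. (G x)\<^sup>2"]
    note S5 = prod_fst[OF px pt(1) Gm]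
    have F1sq_eq: "(\<lambda>z. (F1 z)\<^sup>2) = (\<lambda>z. (H (fst z))\<^sup>2 * (w (snd z))\<^sup>2 + 2 * (H (fst z) * G (fst z) * w (snd z)) + (G (fst z))\<^sup>2)"
      by (simp add: fun_eq_iff F1_def power2_eq_square algebra_simps)
    have F1_eq: "F1 = (\<lambda>z. H (fst z) * w (snd z) + G (fst z))"
      by (simp add: fun_eq_iff F1_def mult.commute)
    have e1: "integral\<^sup>L (px \<Otimes>\<^sub>M pt) (\<lambda>z. (F1 z)\<^sup>2)
        = integral\<^sup>L px (\<lambda>x. (H x)\<^sup>2) * (1 / P) + 2 * (integral\<^sup>L px (\<lambda>x. H x * G x) * 1) + integral\<^sup>L px (\<lambda>x. (G x)\<^sup>2)"
      unfolding F1sq_eq using S1 S2 S4 G2i Ew Ew2 by (simp add: Gm)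
    have e2: "integral\<^sup>L (px \<Otimes>\<^sub>M pt) F1 = integral\<^sup>L px H * 1 + integral\<^sup>L px G"
      unfolding F1_eq using S3 S5 Gi Ew by simp
    show ?thesis unfolding e1 e2 Vm Varw using P_pos by (simp add: field_simps power2_eq_square)
  qed
  show ?thesis
    unfolding LHS VarY R1 R2 R3 R4 EF2 using main by simp
qed

end
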